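(* The Banach algebra $\mathrm{Z}_{\mathbb{Z}_2}\mathrm{L}^1(\mathbb{T})=\{f\in\mathrm{L}^1(\mathbb{T}): f(s^{-1})=f(s)\text{ for a.e. }s\in\mathbb{T}\}$, a closed subalgebra of the convolution algebra $\mathrm{L}^1(\mathbb{T})$, is amenable.
   Context: $\mathbb{T}=\{s\in\mathbb{C}:|s|=1\}$ with normalised Haar measure; $\mathrm{L}^1(\mathbb{T})$ is its convolution algebra. A Banach algebra $\mathfrak{A}$ is amenable if it has a bounded approximate diagonal: a bounded net $(\mu_\alpha)$ in $\mathfrak{A}\hat\otimes\mathfrak{A}$ with $m(\mu_\alpha)a\to a$, $a\,m(\mu_\alpha)\to a$, $a\cdot\mu_\alpha-\mu_\alpha\cdot a\to0$ for all $a$ ($m$ multiplication, $a\cdot(b\otimes c)=ab\otimes c$, $(b\otimes c)\cdot a=b\otimes ca$). *)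

theory Defs
  imports "HOL-Analysis.Analysis"
begin

text \<open>Functions on the circle are modelled as functions complex to complex;
only their values on the unit circle matter (the measure lives there).\<close>

type_synonym cfun = "complex \<Rightarrow> complex"

definition haarT :: "complex measure" where
  "haarT = distr (restrict_space lborel {0..<1::real}) borel (\<lambda>t. cis (2 * pi * t))"

definition L1T :: "cfun set" where
  "L1T = {f. f \<in> borel_measurable borel \<and> integrable haarT f}"

definition L1norm :: "cfun \<Rightarrow> real" where
  "L1norm f = (\<integral>s. cmod (f s) \<partial>haarT)"

definition convT :: "cfun \<Rightarrow> cfun \<Rightarrow> cfun" where
  "convT f g = (\<lambda>s. \<integral>t. f (s * inverse t) * g t \<partial>haarT)"

definition ZL1T :: "cfun set" where
  "ZL1T = {f \<in> L1T. AE s in haarT. f (inverse s) = f s}"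

definition bilinear_on :: "cfun set \<Rightarrow> (cfun \<Rightarrow> cfun \<Rightarrow> complex) \<Rightarrow> bool" where
  "bilinear_on A \<phi> \<longleftrightarrow>
     (\<forall>a\<in>A. \<forall>a'\<in>A. \<forall>b\<in>A.
        \<phi> (\<lambda>x. a x + a' x) b = \<phi> a b + \<phi> a' b \<and>
        \<phi> b (\<lambda>x. a x + a' x) = \<phi> b a + \<phi> b a') \<and>
     (\<forall>a\<in>A. \<forall>b\<in>A. \<forall>c::complex.
        \<phi> (\<lambda>x. c * a x) b = c * \<phi> a b \<and> \<phi> a (\<lambda>x. c * b x) = c * \<phi> a b)"

text \<open>A finite list of pairs [(a_i,b_i)] represents the algebraic tensor
sum_i a_i (x) b_i in A (x) A; two lists represent the same tensor iff every
bilinear form on A takes the same value on them (universal property).\<close>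
definition tensor_eq :: "cfun set \<Rightarrow> (cfun \<times> cfun) list \<Rightarrow> (cfun \<times> cfun) list \<Rightarrow> bool" where
  "tensor_eq A xs ys \<longleftrightarrow>
     (\<forall>\<phi>. bilinear_on A \<phi> \<longrightarrow>
        (\<Sum>(a,b)\<leftarrow>xs. \<phi> a b) = (\<Sum>(a,b)\<leftarrow>ys. \<phi> a b))"

definition proj_norm :: "cfun set \<Rightarrow> (cfun \<Rightarrow> real) \<Rightarrow> (cfun \<times> cfun) list \<Rightarrow> real" where
  "proj_norm A nrm xs =
     Inf {(\<Sum>(a,b)\<leftarrow>ys. nrm a * nrm b) | ys. set ys \<subseteq> A \<times> A \<and> tensor_eq A xs ys}"

definition tensor_mult :: "(cfun \<Rightarrow> cfun \<Rightarrow> cfun) \<Rightarrow> (cfun \<times> cfun) list \<Rightarrow> cfun" where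
  "tensor_mult mul xs = (\<lambda>x. (\<Sum>(a,b)\<leftarrow>xs. mul a b x))"

text \<open>a.u - u.a  for  a.(b (x) c) = ab (x) c  and  (b (x) c).a = b (x) ca.\<close>
definition tensor_commutator :: "(cfun \<Rightarrow> cfun \<Rightarrow> cfun) \<Rightarrow> cfun \<Rightarrow> (cfun \<times> cfun) list \<Rightarrow> (cfun \<times> cfun) list" where
  "tensor_commutator mul a xs =
     map (\<lambda>(b,c). (mul a b, c)) xs @ map (\<lambda>(b,c). ((\<lambda>x. - b x), mul c a)) xs"

text \<open>Amenability: existence of a bounded approximate diagonal, in the
standard equivalent finite form (nets indexed by (finite set, epsilon); finite
tensors are dense in the projective tensor product).\<close>
definition amenable_on :: "cfun set \<Rightarrow> (cfun \<Rightarrow> real) \<Rightarrow> (cfun \<Rightarrow> cfun \<Rightarrow> cfun) \<Rightarrow> bool" where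
  "amenable_on A nrm mul \<longleftrightarrow>
     (\<exists>M::real. \<forall>F \<epsilon>. finite F \<and> F \<subseteq> A \<and> \<epsilon> > 0 \<longrightarrow>
        (\<exists>xs. set xs \<subseteq> A \<times> A \<and> proj_norm A nrm xs \<le> M \<and>
           (\<forall>a\<in>F. nrm (\<lambda>x. mul (tensor_mult mul xs) a x - a x) < \<epsilon> \<and>
                  nrm (\<lambda>x. mul a (tensor_mult mul xs) x - a x) < \<epsilon> \<and>
                  proj_norm A nrm (tensor_commutator mul a xs) < \<epsilon>)))"

end

theory Submission
  imports Defs "HOL-Probability.Probability"
begin
definition RR :: "real measure" where "RR = restrict_space lborel {0..<1::real}"
definition cc :: "real \<Rightarrow> complex" where "cc t = cis (2 * pi * t)"

lemma cc_meas[measurable]: "cc \<in> borel_measurable borel"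
  unfolding cc_def by (intro borel_measurable_continuous_onI continuous_intros)

lemma cc_meas_RR[measurable]: "cc \<in> measurable RR borel"
  unfolding RR_def by (rule measurable_restrict_space1) simp

lemma haarT_eq: "haarT = distr RR borel cc"
  unfolding haarT_def RR_def cc_def by simp

lemma space_RR: "space RR = {0..<1}" unfolding RR_def by simp

lemma prob_RR: "prob_space RR"
proof
  show "emeasure RR (space RR) = 1"
    unfolding RR_def by (simp add: emeasure_restrict_space)
qed

lemma prob_haarT: "prob_space haarT"
  unfolding haarT_eq by (rule prob_space.prob_space_distr[OF prob_RR]) simp

interpretation H: prob_space haarT by (rule prob_haarT)

lemma space_haarT[simp]: "space haarT = UNIV" unfolding haarT_eq by simp
lemma sets_haarT[simp, measurable_cong]: "sets haarT = sets borel" unfolding haarT_eq by simp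

lemma measurable_haarT1[simp]: "measurable haarT N = measurable borel N"
  by (rule measurable_cong_sets) auto
lemma measurable_haarT2[simp]: "measurable M haarT = measurable M borel"
  by (rule measurable_cong_sets) auto

lemma AE_circle: "AE t in haarT. cmod t = 1"
  unfolding haarT_eq by (subst AE_distr_iff) (auto simp: cc_def)

lemma integral_haarT: fixes f :: "complex \<Rightarrow> 'b::{banach,second_countable_topology}" shows "f \<in> borel_measurable borel \<Longrightarrow>
  integral\<^sup>L haarT f = (\<integral>x. indicator {0..<1::real} x *\<^sub>R f (cc x) \<partial>lborel)"
  unfolding haarT_eq using integral_distr[OF cc_meas_RR, of f]
  by (simp add: RR_def integral_restrict_space)

lemma nn_integral_haarT: "f \<in> borel_measurable borel \<Longrightarrow>
  integral\<^sup>N haarT f = (\<integral>\<^sup>+x. f (cc x) * indicator {0..<1::real} x \<partial>lborel)"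
  unfolding haarT_eq using nn_integral_distr[OF cc_meas_RR, of f]
  by (simp add: RR_def nn_integral_restrict_space)

lemma per_int:
  fixes h :: "real \<Rightarrow> 'a"
  assumes per: "\<And>x. h (x + 1) = h x"
  shows "h (x + of_int k) = h x"
proof -
  have pn: "h (y + real n) = h y" for y n
  proof (induction n)
    case (Suc n)
    have "y + real (Suc n) = (y + real n) + 1" by simp
    then show ?case using Suc per by metis
  qed simp
  show ?thesis
  proof (cases "k \<ge> 0")
    case True then show ?thesis using pn[of x "nat k"] by simp
  next
    case False
    then have "x + of_int k + real (nat (-k)) = x" by simp
    then show ?thesis using pn[of "x + of_int k" "nat (-k)"] by simp
  qed
qed

lemma shift_nn:
  fixes f :: "real \<Rightarrow> ennreal"
  assumes [measurable]: "f \<in> borel_measurable borel"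
  shows "(\<integral>\<^sup>+x. f x \<partial>lborel) = (\<integral>\<^sup>+x. f (t + x) \<partial>lborel)"
  using nn_integral_real_affine[of f 1 t] by simp

lemma refl_nn:
  fixes f :: "real \<Rightarrow> ennreal"
  assumes [measurable]: "f \<in> borel_measurable borel"
  shows "(\<integral>\<^sup>+x. f x \<partial>lborel) = (\<integral>\<^sup>+x. f (t - x) \<partial>lborel)"
  using nn_integral_real_affine[of f "-1" t] by simp

lemma periodic_int_shift:
  fixes h :: "real \<Rightarrow> ennreal"
  assumes h[measurable]: "h \<in> borel_measurable borel" and per: "\<And>x. h (x + 1) = h x"
  shows "(\<integral>\<^sup>+x. h x * indicator {\<beta><..\<beta>+1} x \<partial>lborel) = (\<integral>\<^sup>+x. h x * indicator {0<..1} x \<partial>lborel)"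
proof -
  define k where "k = \<lfloor>\<beta>\<rfloor> + 1"
  define \<gamma> where "\<gamma> = \<beta> - of_int k + 1"
  have g0: "0 \<le> \<gamma>" "\<gamma> < 1" unfolding \<gamma>_def k_def by linarith+
  have ind: "indicator {\<beta><..\<beta>+1} x = (indicator {\<beta><..real_of_int k} x + indicator {real_of_int k<..\<beta>+1} x :: ennreal)" for x
    using g0 unfolding \<gamma>_def by (auto simp: indicator_def)
  have "(\<integral>\<^sup>+x. h x * indicator {\<beta><..\<beta>+1} x \<partial>lborel) =
      (\<integral>\<^sup>+x. h x * indicator {\<beta><..real_of_int k} x \<partial>lborel) + (\<integral>\<^sup>+x. h x * indicator {real_of_int k<..\<beta>+1} x \<partial>lborel)"
    unfolding ind by (simp add: distrib_left nn_integral_add)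
  also have "(\<integral>\<^sup>+x. h x * indicator {\<beta><..real_of_int k} x \<partial>lborel) =
      (\<integral>\<^sup>+x. h (of_int (k - 1) + x) * indicator {\<beta><..real_of_int k} (of_int (k - 1) + x) \<partial>lborel)"
    by (rule shift_nn) simp
  also have "\<dots> = (\<integral>\<^sup>+x. h x * indicator {\<gamma><..1} x \<partial>lborel)"
  proof (rule nn_integral_cong)
    fix x
    have "h (of_int (k - 1) + x) = h x" using per_int[of h x "k - 1", OF per] by (simp add: add.commute)
    moreover have "(of_int (k - 1) + x \<in> {\<beta><..real_of_int k}) = (x \<in> {\<gamma><..1})"
      unfolding \<gamma>_def by auto
    ultimately show "h (of_int (k - 1) + x) * indicator {\<beta><..real_of_int k} (of_int (k - 1) + x) = h x * indicator {\<gamma><..1} x"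
      by (simp add: indicator_def)
  qed
  also have "(\<integral>\<^sup>+x. h x * indicator {real_of_int k<..\<beta>+1} x \<partial>lborel) =
      (\<integral>\<^sup>+x. h (of_int k + x) * indicator {real_of_int k<..\<beta>+1} (of_int k + x) \<partial>lborel)"
    by (rule shift_nn) simp
  also have "\<dots> = (\<integral>\<^sup>+x. h x * indicator {0<..\<gamma>} x \<partial>lborel)"
  proof (rule nn_integral_cong)
    fix x
    have "h (of_int k + x) = h x" using per_int[of h x "k", OF per] by (simp add: add.commute)
    moreover have "(of_int k + x \<in> {real_of_int k<..\<beta>+1}) = (x \<in> {0<..\<gamma>})"
      unfolding \<gamma>_def by auto
    ultimately show "h (of_int k + x) * indicator {real_of_int k<..\<beta>+1} (of_int k + x) = h x * indicator {0<..\<gamma>} x"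
      by (simp add: indicator_def)
  qed
  also have "(\<integral>\<^sup>+x. h x * indicator {\<gamma><..1} x \<partial>lborel) + (\<integral>\<^sup>+x. h x * indicator {0<..\<gamma>} x \<partial>lborel)
     = (\<integral>\<^sup>+x. h x * indicator {\<gamma><..1} x + h x * indicator {0<..\<gamma>} x \<partial>lborel)"
    by (simp add: nn_integral_add)
  also have "\<dots> = (\<integral>\<^sup>+x. h x * indicator {0<..1} x \<partial>lborel)"
    using g0 by (intro nn_integral_cong) (auto simp: indicator_def)
  finally show ?thesis .
qed

lemma periodic_refl:
  fixes h :: "real \<Rightarrow> ennreal"
  assumes h[measurable]: "h \<in> borel_measurable borel" and per: "\<And>x. h (x + 1) = h x"
  shows "(\<integral>\<^sup>+x. h (\<alpha> - x) * indicator {0..<1} x \<partial>lborel) = (\<integral>\<^sup>+x. h x * indicator {0..<1} x \<partial>lborel)"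
proof -
  have "(\<integral>\<^sup>+x. h x * indicator {\<alpha>-1<..\<alpha>-1+1} x \<partial>lborel) =
     (\<integral>\<^sup>+x. h (\<alpha> - x) * indicator {\<alpha>-1<..\<alpha>-1+1} (\<alpha> - x) \<partial>lborel)"
    by (rule refl_nn) simp
  also have "\<dots> = (\<integral>\<^sup>+x. h (\<alpha> - x) * indicator {0..<1} x \<partial>lborel)"
    by (intro nn_integral_cong) (auto simp: indicator_def)
  finally have 1: "(\<integral>\<^sup>+x. h (\<alpha> - x) * indicator {0..<1} x \<partial>lborel) = (\<integral>\<^sup>+x. h x * indicator {0<..1} x \<partial>lborel)"
    using periodic_int_shift[OF h per, of "\<alpha> - 1"] by simp
  also have "\<dots> = (\<integral>\<^sup>+x. h x * indicator {0..<1} x \<partial>lborel)"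
  proof (intro nn_integral_cong_AE)
    show "AE x in lborel. h x * indicator {0<..1} x = h x * indicator {0..<1} x"
      using AE_lborel_singleton[of 0] AE_lborel_singleton[of 1]
      by eventually_elim (auto simp: indicator_def)
  qed
  finally show ?thesis .
qed

lemma emeasure_distr_RR:
  fixes f :: "real \<Rightarrow> complex"
  assumes [measurable]: "f \<in> borel_measurable borel" and A: "A \<in> sets borel"
  shows "emeasure (distr RR borel f) A = (\<integral>\<^sup>+x. indicator A (f x) * indicator {0..<1} x \<partial>lborel)"
proof -
  have fm: "f \<in> measurable RR borel" unfolding RR_def by (rule measurable_restrict_space1) simp
  have "emeasure (distr RR borel f) A = (\<integral>\<^sup>+x. indicator A x \<partial>distr RR borel f)"
    using A by simp
  also have "\<dots> = (\<integral>\<^sup>+x. indicator A (f x) \<partial>RR)"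
    using A by (intro nn_integral_distr[OF fm]) auto
  also have "\<dots> = (\<integral>\<^sup>+x. indicator A (f x) * indicator {0..<1} x \<partial>lborel)"
    unfolding RR_def by (subst nn_integral_restrict_space) auto
  finally show ?thesis .
qed

lemma cc_add1: "cc (x + 1) = cc x"
  unfolding cc_def by (simp add: distrib_left cis_mult[symmetric])

lemma haarT_inv:
  assumes s: "cmod s = 1"
  shows "distr haarT borel (\<lambda>t. s * inverse t) = haarT"
proof -
  define \<alpha> where "\<alpha> = Arg s / (2 * pi)"
  have s0: "s \<noteq> 0" using s by auto
  have s_al: "s = cc \<alpha>" unfolding cc_def \<alpha>_def using s s0
    by (simp add: cis_Arg sgn_eq)
  have eq: "s * inverse (cc x) = cc (\<alpha> - x)" for x
    unfolding s_al cc_def by (simp add: cis_mult right_diff_distrib)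
  have m1[measurable]: "(\<lambda>t. s * inverse t) \<in> borel_measurable (borel :: complex measure)" by measurable
  have "distr haarT borel (\<lambda>t. s * inverse t) = distr RR borel (\<lambda>x. s * inverse (cc x))"
    unfolding haarT_eq by (subst distr_distr) (auto simp: comp_def)
  also have "\<dots> = distr RR borel (\<lambda>x. cc (\<alpha> - x))" by (simp add: eq)
  also have "\<dots> = distr RR borel cc"
  proof (rule measure_eqI)
    fix A assume A: "A \<in> sets (distr RR borel (\<lambda>x. cc (\<alpha> - x)))"
    then have A': "A \<in> sets borel" by simp
    have hm: "(\<lambda>y. indicator A (cc y) :: ennreal) \<in> borel_measurable borel" using A' by measurable
    show "emeasure (distr RR borel (\<lambda>x. cc (\<alpha> - x))) A = emeasure (distr RR borel cc) A"
      using periodic_refl[OF hm, of \<alpha>] A' by (simp add: emeasure_distr_RR cc_add1)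
  qed simp
  finally show ?thesis unfolding haarT_eq .
qed

lemma haarT_rot:
  assumes s: "cmod s = 1"
  shows "distr haarT borel (\<lambda>t. s * t) = haarT"
proof -
  have "distr haarT borel (\<lambda>t. s * t) = distr (distr haarT borel (\<lambda>t. 1 * inverse t)) borel (\<lambda>t. s * inverse t)"
    by (subst distr_distr) (auto simp: comp_def)
  also have "\<dots> = haarT" using haarT_inv[of 1] haarT_inv[OF s] by simp
  finally show ?thesis .
qed

lemma integral_inv:
  fixes f :: "complex \<Rightarrow> 'b::{banach,second_countable_topology}"
  assumes s: "cmod s = 1" and f[measurable]: "f \<in> borel_measurable borel"
  shows "(\<integral>t. f (s * inverse t) \<partial>haarT) = (\<integral>t. f t \<partial>haarT)"
proof -
  have "(\<integral>t. f t \<partial>haarT) = (\<integral>t. f t \<partial>distr haarT borel (\<lambda>t. s * inverse t))"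
    using haarT_inv[OF s] by simp
  also have "\<dots> = (\<integral>t. f (s * inverse t) \<partial>haarT)"
    by (rule integral_distr) auto
  finally show ?thesis by simp
qed

lemma integral_rot:
  fixes f :: "complex \<Rightarrow> 'b::{banach,second_countable_topology}"
  assumes s: "cmod s = 1" and f[measurable]: "f \<in> borel_measurable borel"
  shows "(\<integral>t. f (s * t) \<partial>haarT) = (\<integral>t. f t \<partial>haarT)"
proof -
  have "(\<integral>t. f t \<partial>haarT) = (\<integral>t. f t \<partial>distr haarT borel (\<lambda>t. s * t))"
    using haarT_rot[OF s] by simp
  also have "\<dots> = (\<integral>t. f (s * t) \<partial>haarT)"
    by (rule integral_distr) auto
  finally show ?thesis by simp
qed

lemma nn_integral_inv:
  assumes s: "cmod s = 1" and f[measurable]: "f \<in> borel_measurable borel"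
  shows "(\<integral>\<^sup>+t. f (s * inverse t) \<partial>haarT) = (\<integral>\<^sup>+t. f t \<partial>haarT)"
proof -
  have "(\<integral>\<^sup>+t. f t \<partial>haarT) = (\<integral>\<^sup>+t. f t \<partial>distr haarT borel (\<lambda>t. s * inverse t))"
    using haarT_inv[OF s] by simp
  also have "\<dots> = (\<integral>\<^sup>+t. f (s * inverse t) \<partial>haarT)"
    by (rule nn_integral_distr) auto
  finally show ?thesis by simp
qed

lemma nn_integral_rot:
  assumes s: "cmod s = 1" and f[measurable]: "f \<in> borel_measurable borel"
  shows "(\<integral>\<^sup>+t. f (s * t) \<partial>haarT) = (\<integral>\<^sup>+t. f t \<partial>haarT)"
proof -
  have "(\<integral>\<^sup>+t. f t \<partial>haarT) = (\<integral>\<^sup>+t. f t \<partial>distr haarT borel (\<lambda>t. s * t))"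
    using haarT_rot[OF s] by simp
  also have "\<dots> = (\<integral>\<^sup>+t. f (s * t) \<partial>haarT)"
    by (rule nn_integral_distr) auto
  finally show ?thesis by simp
qed

lemma integrable_inv:
  fixes f :: "complex \<Rightarrow> 'b::{banach,second_countable_topology}"
  assumes s: "cmod s = 1" and f[measurable]: "f \<in> borel_measurable borel"
  shows "integrable haarT (\<lambda>t. f (s * inverse t)) \<longleftrightarrow> integrable haarT f"
proof -
  have "integrable haarT f \<longleftrightarrow> integrable (distr haarT borel (\<lambda>t. s * inverse t)) f"
    using haarT_inv[OF s] by simp
  also have "\<dots> \<longleftrightarrow> integrable haarT (\<lambda>t. f (s * inverse t))"
    by (rule integrable_distr_eq) auto
  finally show ?thesis by simp
qed

lemma integrable_rot:
  fixes f :: "complex \<Rightarrow> 'b::{banach,second_countable_topology}"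
  assumes s: "cmod s = 1" and f[measurable]: "f \<in> borel_measurable borel"
  shows "integrable haarT (\<lambda>t. f (s * t)) \<longleftrightarrow> integrable haarT f"
proof -
  have "integrable haarT f \<longleftrightarrow> integrable (distr haarT borel (\<lambda>t. s * t)) f"
    using haarT_rot[OF s] by simp
  also have "\<dots> \<longleftrightarrow> integrable haarT (\<lambda>t. f (s * t))"
    by (rule integrable_distr_eq) auto
  finally show ?thesis by simp
qed

lemma prob_UNIV[simp]: "measure haarT UNIV = 1"
  using H.prob_space by simp

lemma AE_inv:
  assumes s: "cmod s = 1" and P: "AE t in haarT. P t" and [measurable]: "Measurable.pred borel P"
  shows "AE t in haarT. P (s * inverse t)"
proof -
  have "AE t in distr haarT borel (\<lambda>t. s * inverse t). P t" by (subst haarT_inv[OF s]) (rule P)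
  then show ?thesis by (subst (asm) AE_distr_iff) auto
qed

lemma AE_ne0: "AE t in haarT. t \<noteq> 0"
  using AE_circle by eventually_elim auto

lemma integrable_bdd:
  fixes f :: "complex \<Rightarrow> 'b::{banach,second_countable_topology}"
  assumes "f \<in> borel_measurable borel" "\<And>t. cmod t = 1 \<Longrightarrow> norm (f t) \<le> B"
  shows "integrable haarT f"
  using assms AE_circle by (intro H.integrable_const_bound[where B=B]) (auto elim: eventually_mono)

lemma char_integral:
  fixes n m :: nat
  shows "(\<integral>t. t^n * (inverse t)^m \<partial>haarT) = (if n = m then 1 else 0)"
proof (cases "n = m")
  case True
  have "(\<integral>t. t^n * (inverse t)^m \<partial>haarT) = (\<integral>t. 1 \<partial>haarT)"
    using AE_ne0 True by (intro integral_cong_AE) (auto elim: eventually_mono simp: power_mult_distrib[symmetric])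
  then show ?thesis using True by simp
next
  case False
  define \<theta> where "\<theta> = pi / (real n - real m)"
  define s where "s = cis \<theta>"
  have s1: "cmod s = 1" unfolding s_def by simp
  have fac: "s^n * (inverse s)^m = -1"
  proof -
    have 1: "s^n = cis (real n * \<theta>)" unfolding s_def by (rule Complex.DeMoivre)
    have 2: "(inverse s)^m = cis (real m * (- \<theta>))" unfolding s_def cis_inverse by (rule Complex.DeMoivre)
    have "s^n * (inverse s)^m = cis (real n * \<theta> - real m * \<theta>)"
      unfolding 1 2 cis_mult by simp
    also have "real n * \<theta> - real m * \<theta> = (real n - real m) * \<theta>" by (simp add: algebra_simps)
    also have "\<dots> = pi" unfolding \<theta>_def using False by simp
    finally show ?thesis by simp
  qed
  let ?I = "(\<integral>t. t^n * (inverse t)^m \<partial>haarT)"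
  have "?I = (\<integral>t. (s*t)^n * (inverse (s*t))^m \<partial>haarT)"
    by (rule integral_rot[OF s1, symmetric]) measurable
  also have "\<dots> = (\<integral>t. (s^n * (inverse s)^m) * (t^n * (inverse t)^m) \<partial>haarT)"
    by (simp add: power_mult_distrib mult_ac)
  also have "\<dots> = - ?I" by (simp add: fac)
  finally have "?I = 0" by simp
  then show ?thesis using False by simp
qed

lemma char_integral': "(\<integral>t. (inverse t)^n \<partial>haarT) = (if n = 0 then 1 else 0)"
  using char_integral[of 0 n] by (cases "n = 0") auto

lemma char_integral'': "(\<integral>t. t^n \<partial>haarT) = (if n = 0 then 1 else 0)"
  using char_integral[of n 0] by auto

definition pp :: "nat \<Rightarrow> cfun" where
  "pp n x = (if n = 0 then 1 else x^n + (inverse x)^n)"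

definition coef :: "cfun \<Rightarrow> nat \<Rightarrow> complex" where
  "coef a n = (\<integral>t. a t * (inverse t)^n \<partial>haarT)"

lemma pp_meas[measurable]: "pp n \<in> borel_measurable borel"
  unfolding pp_def by measurable

lemma pp_bound: "cmod t = 1 \<Longrightarrow> cmod (pp n t) \<le> 2"
  unfolding pp_def using norm_triangle_ineq[of "t^n" "(inverse t)^n"]
  by (auto simp: norm_power norm_inverse)

lemma pp_sym[simp]: "pp n (inverse x) = pp n x"
  unfolding pp_def by simp

lemma pp0[simp]: "pp 0 x = 1" unfolding pp_def by simp

lemma sets_pair_haarT: "sets (borel \<Otimes>\<^sub>M haarT) = sets (borel \<Otimes>\<^sub>M (borel :: complex measure))"
  by (rule sets_pair_measure_cong) auto

lemma sets_pair_haarT2: "sets (haarT \<Otimes>\<^sub>M haarT) = sets (borel \<Otimes>\<^sub>M (borel :: complex measure))"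
  by (rule sets_pair_measure_cong) auto

lemma conv_integrand_meas:
  fixes f g :: cfun
  assumes [measurable]: "f \<in> borel_measurable borel" "g \<in> borel_measurable borel"
  shows "(\<lambda>(x,t). f (x * inverse t) * g t) \<in> borel_measurable (borel \<Otimes>\<^sub>M haarT)"
proof -
  have "(\<lambda>(x,t). f (x * inverse t) * g t) \<in> borel_measurable (borel \<Otimes>\<^sub>M (borel :: complex measure))"
    by measurable
  then show ?thesis by (subst measurable_cong_sets[OF sets_pair_haarT refl])
qed

lemma convT_meas[measurable]:
  fixes f g :: cfun
  assumes [measurable]: "f \<in> borel_measurable borel" "g \<in> borel_measurable borel"
  shows "convT f g \<in> borel_measurable borel"
proof -
  have "(\<lambda>x. \<integral>t. f (x * inverse t) * g t \<partial>haarT) \<in> borel_measurable borel"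
    using H.borel_measurable_lebesgue_integral[of "\<lambda>x t. f (x * inverse t) * g t" borel]
      conv_integrand_meas[OF assms] by simp
  then show ?thesis unfolding convT_def .
qed

lemma ZL1T_I:
  assumes "f \<in> borel_measurable borel" "integrable haarT f" "AE s in haarT. f (inverse s) = f s"
  shows "f \<in> ZL1T"
  using assms unfolding ZL1T_def L1T_def by auto

lemma ZL1T_D:
  assumes "f \<in> ZL1T"
  shows "f \<in> borel_measurable borel" "integrable haarT f" "AE s in haarT. f (inverse s) = f s"
  using assms unfolding ZL1T_def L1T_def by auto

lemma ZL1T_add: assumes "f \<in> ZL1T" "g \<in> ZL1T" shows "(\<lambda>x. f x + g x) \<in> ZL1T"
proof -
  note A = ZL1T_D[OF assms(1)] and B = ZL1T_D[OF assms(2)]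
  show ?thesis
  proof (rule ZL1T_I)
    show "AE s in haarT. f (inverse s) + g (inverse s) = f s + g s" using A(3) B(3) by eventually_elim simp
  qed (use A B in auto)
qed

lemma ZL1T_cmult: assumes "f \<in> ZL1T" shows "(\<lambda>x. c * f x) \<in> ZL1T"
proof -
  note A = ZL1T_D[OF assms(1)]
  show ?thesis
  proof (rule ZL1T_I)
    show "AE s in haarT. c * f (inverse s) = c * f s" using A(3) by eventually_elim simp
  qed (use A in auto)
qed

lemma ZL1T_uminus: assumes "f \<in> ZL1T" shows "(\<lambda>x. - f x) \<in> ZL1T"
  using ZL1T_cmult[OF assms, of "-1"] by simp

lemma ZL1T_diff: assumes "f \<in> ZL1T" "g \<in> ZL1T" shows "(\<lambda>x. f x - g x) \<in> ZL1T"
  using ZL1T_add[OF assms(1) ZL1T_uminus[OF assms(2)]] by simp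

lemma ZL1T_const: "(\<lambda>x. c) \<in> ZL1T"
  by (rule ZL1T_I) auto

lemma ZL1T_zero: "(\<lambda>x. 0) \<in> ZL1T"
  by (rule ZL1T_I) auto

lemma ZL1T_pp: "pp n \<in> ZL1T"
  by (rule ZL1T_I) (auto intro!: integrable_bdd pp_bound)

lemma ZL1T_sum: "(\<And>i. i \<in> I \<Longrightarrow> f i \<in> ZL1T) \<Longrightarrow> (\<lambda>x. \<Sum>i\<in>I. c i * f i x) \<in> ZL1T"
proof (induction I rule: infinite_finite_induct)
  case (insert i I)
  then show ?case using ZL1T_add[OF ZL1T_cmult[of "f i" "c i"], of "\<lambda>x. \<Sum>i\<in>I. c i * f i x"] by simp
qed (auto intro: ZL1T_zero)

lemma ZL1T_null:
  assumes "f \<in> borel_measurable borel" "\<And>x. cmod x = 1 \<Longrightarrow> f x = 0"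
  shows "f \<in> ZL1T"
proof (rule ZL1T_I)
  show "integrable haarT f" using assms by (intro integrable_bdd[where B=0]) auto
  show "AE s in haarT. f (inverse s) = f s" using AE_circle
    by eventually_elim (use assms in \<open>auto simp: norm_inverse\<close>)
qed fact

lemma integrable_mult_char:
  assumes "integrable haarT a" "a \<in> borel_measurable borel"
  shows "integrable haarT (\<lambda>t. a t * (inverse t)^n)" "integrable haarT (\<lambda>t. a t * t^n)"
   "integrable haarT (\<lambda>t. a t * pp n t)"
proof -
  note [measurable] = assms(2)
  have b: "cmod (a t * pp n t) \<le> cmod (2 * a t)" if "cmod t = 1" for t
  proof -
    have "cmod (a t) * cmod (pp n t) \<le> cmod (a t) * 2" by (rule mult_left_mono[OF pp_bound[OF that]]) simp
    then show ?thesis by (simp add: norm_mult mult.commute)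
  qed
  have b1: "cmod (a t * (inverse t)^n) \<le> cmod (a t)" if "cmod t = 1" for t
    using that by (simp add: norm_mult norm_power norm_inverse)
  have b2: "cmod (a t * t^n) \<le> cmod (a t)" if "cmod t = 1" for t
    using that by (simp add: norm_mult norm_power)
  have i2: "integrable haarT (\<lambda>t. 2 * a t)" using assms(1) by simp
  have m1: "(\<lambda>t. a t * (inverse t)^n) \<in> borel_measurable haarT" by simp
  have m2: "(\<lambda>t. a t * t^n) \<in> borel_measurable haarT" by simp
  have m3: "(\<lambda>t. a t * pp n t) \<in> borel_measurable haarT" by simp
  have ae1: "AE t in haarT. norm (a t * (inverse t)^n) \<le> norm (a t)" using AE_circle by eventually_elim (rule b1)
  have ae2: "AE t in haarT. norm (a t * t^n) \<le> norm (a t)" using AE_circle by eventually_elim (rule b2)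
  have ae3: "AE t in haarT. norm (a t * pp n t) \<le> norm (2 * a t)" using AE_circle by eventually_elim (rule b)
  show "integrable haarT (\<lambda>t. a t * (inverse t)^n)" by (rule Bochner_Integration.integrable_bound[OF assms(1) m1 ae1])
  show "integrable haarT (\<lambda>t. a t * t^n)" by (rule Bochner_Integration.integrable_bound[OF assms(1) m2 ae2])
  show "integrable haarT (\<lambda>t. a t * pp n t)" by (rule Bochner_Integration.integrable_bound[OF i2 m3 ae3])
qed

lemma coef_pp: "coef (pp m) n = (if n = m then 1 else 0)"
proof (cases "m = 0")
  case True then show ?thesis unfolding coef_def using char_integral' by simp
next
  case False
  have "coef (pp m) n = (\<integral>t. t^m * (inverse t)^n + (inverse t)^(m+n) \<partial>haarT)"
    unfolding coef_def pp_def using False by (simp add: distrib_right power_add)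
  also have "\<dots> = (\<integral>t. t^m * (inverse t)^n \<partial>haarT) + (\<integral>t. (inverse t)^(m+n) \<partial>haarT)"
    by (intro Bochner_Integration.integral_add integrable_bdd[where B=1])
      (auto simp: norm_mult norm_power norm_inverse)
  also have "\<dots> = (if n = m then 1 else 0)"
    using False by (simp add: char_integral char_integral')
  finally show ?thesis .
qed

lemma coef_sym:
  assumes a: "a \<in> ZL1T"
  shows "(\<integral>t. a t * t^n \<partial>haarT) = coef a n"
proof -
  note aD = ZL1T_D[OF a]
  have [measurable]: "a \<in> borel_measurable borel" by (rule aD)
  have "(\<integral>t. a t * t^n \<partial>haarT) = (\<integral>t. a (1 * inverse t) * (1 * inverse t)^n \<partial>haarT)"
    by (rule integral_inv[symmetric]) auto
  also have "\<dots> = coef a n" unfolding coef_def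
    using aD(3) by (intro integral_cong_AE) (auto elim: eventually_mono)
  finally show ?thesis .
qed

lemma convT_comm:
  fixes f g :: cfun
  assumes x: "cmod x = 1" and [measurable]: "f \<in> borel_measurable borel" "g \<in> borel_measurable borel"
  shows "convT f g x = convT g f x"
proof -
  define h where "h t = g (x * inverse t) * f t" for t
  have [measurable]: "h \<in> borel_measurable borel" unfolding h_def by measurable
  have x0: "x \<noteq> 0" using x by auto
  have xe: "t \<noteq> 0 \<Longrightarrow> x * inverse (x * inverse t) = t" for t
    by (simp add: inverse_mult_distrib x0 mult.assoc[symmetric])
  have xe2: "x * (t * inverse x) = t" for t using x0 by (simp add: field_simps)
  have "convT f g x = (\<integral>t. h (x * inverse t) \<partial>haarT)"
    unfolding convT_def h_def using AE_ne0
    by (intro integral_cong_AE) (auto elim!: eventually_mono simp: xe xe2 mult.commute)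
  also have "\<dots> = (\<integral>t. h t \<partial>haarT)" by (rule integral_inv[OF x]) simp
  also have "\<dots> = convT g f x" unfolding convT_def h_def ..
  finally show ?thesis .
qed

lemma convT_pp_left:
  assumes a: "a \<in> ZL1T" and x0: "x \<noteq> 0"
  shows "convT (pp n) a x = coef a n * pp n x"
proof -
  note aD = ZL1T_D[OF a]
  have [measurable]: "a \<in> borel_measurable borel" by (rule aD)
  show ?thesis
  proof (cases "n = 0")
    case True then show ?thesis unfolding convT_def coef_def by simp
  next
    case False
    have "convT (pp n) a x = (\<integral>t. x^n * (a t * (inverse t)^n) + (inverse x)^n * (a t * t^n) \<partial>haarT)"
      unfolding convT_def pp_def using False
      by (intro Bochner_Integration.integral_cong) (auto simp: power_mult_distrib algebra_simps)
    also have "\<dots> = x^n * coef a n + (inverse x)^n * (\<integral>t. a t * t^n \<partial>haarT)"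
      unfolding coef_def using integrable_mult_char[OF aD(2,1)] by simp
    also have "\<dots> = coef a n * pp n x" using coef_sym[OF a] False by (simp add: pp_def algebra_simps)
    finally show ?thesis .
  qed
qed

lemma convT_pp_right:
  assumes a: "a \<in> ZL1T" and x: "cmod x = 1"
  shows "convT a (pp n) x = coef a n * pp n x"
proof -
  have "x \<noteq> 0" using x by auto
  then show ?thesis using convT_comm[OF x ZL1T_D(1)[OF a] pp_meas] convT_pp_left[OF a] by auto
qed

lemma geo_aux:
  fixes x y :: complex
  assumes xy: "x * y = 1"
  shows "(\<Sum>i<n. x^i * y^n) = (\<Sum>k<n. y^Suc k)"
proof (induction n)
  case (Suc n)
  have "(\<Sum>i<Suc n. x^i * y^Suc n) = y * (\<Sum>i<n. x^i * y^n) + (x*y)^n * y"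
    by (simp add: sum_distrib_left mult_ac power_mult_distrib)
  also have "\<dots> = y * (\<Sum>k<n. y^Suc k) + y" using Suc xy by simp
  also have "\<dots> = (\<Sum>k<Suc n. y^Suc k)"
    by (subst sum.lessThan_Suc_shift) (simp add: sum_distrib_left)
  finally show ?case .
qed simp

lemma double_geo:
  fixes x :: complex
  assumes x0: "x \<noteq> 0"
  shows "(\<Sum>i<n. x^i) * (\<Sum>j<n. (inverse x)^j) = (\<Sum>k<n. of_nat (n - k) * pp k x)"
proof (induction n)
  case (Suc n)
  let ?y = "inverse x"
  have xy: "x * ?y = 1" "?y * x = 1" using x0 by auto
  have "(\<Sum>i<Suc n. x^i) * (\<Sum>j<Suc n. ?y^j) =
     (\<Sum>i<n. x^i) * (\<Sum>j<n. ?y^j) + (\<Sum>i<n. x^i * ?y^n) + (\<Sum>j<n. ?y^j * x^n) + (x * ?y)^n"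
    by (simp add: algebra_simps sum_distrib_left sum_distrib_right power_mult_distrib)
  also have "\<dots> = (\<Sum>k<n. of_nat (n - k) * pp k x) + ((\<Sum>k<n. ?y^Suc k) + (\<Sum>k<n. x^Suc k) + 1)"
    using Suc geo_aux[OF xy(1), of n] geo_aux[OF xy(2), of n] xy by simp
  also have "(\<Sum>k<n. ?y^Suc k) + (\<Sum>k<n. x^Suc k) + 1 = (\<Sum>k<Suc n. pp k x)"
    by (subst sum.lessThan_Suc_shift) (simp add: pp_def sum.distrib)
  also have "(\<Sum>k<n. of_nat (n - k) * pp k x) + (\<Sum>k<Suc n. pp k x) = (\<Sum>k<Suc n. of_nat (Suc n - k) * pp k x)"
  proof -
    have "(\<Sum>k<Suc n. of_nat (Suc n - k) * pp k x) = (\<Sum>k<Suc n. of_nat (n - k) * pp k x + pp k x)"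
      by (intro sum.cong) (auto simp: Suc_diff_le algebra_simps)
    also have "\<dots> = (\<Sum>k<n. of_nat (n - k) * pp k x) + (\<Sum>k<Suc n. pp k x)"
      by (simp add: sum.distrib)
    finally show ?thesis by simp
  qed
  finally show ?case by (simp add: add.assoc)
qed simp

definition fejcr :: "nat \<Rightarrow> nat \<Rightarrow> real" where
  "fejcr K n = (if n \<le> K then 1 - real n / real (K + 1) else 0)"

definition fejc :: "nat \<Rightarrow> nat \<Rightarrow> complex" where
  "fejc K n = of_real (fejcr K n)"

definition Fej :: "nat \<Rightarrow> cfun" where
  "Fej K x = (\<Sum>n\<le>K. fejc K n * pp n x)"

lemma fejc0[simp]: "fejc K 0 = 1" unfolding fejc_def fejcr_def by simp

lemma fejcr_bounds: "0 \<le> fejcr K n" "fejcr K n \<le> 1"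
  unfolding fejcr_def by (auto simp: field_simps)

lemma norm_fejc: "cmod (fejc K n) \<le> 1"
  unfolding fejc_def using fejcr_bounds[of K n] by simp

lemma fejc_mult: "n \<le> K \<Longrightarrow> of_nat (K+1) * fejc K n = of_nat (Suc K - n)"
proof -
  assume n: "n \<le> K"
  have "real (K+1) * fejcr K n = real (Suc K - n)" using n unfolding fejcr_def
    by (simp add: field_simps of_nat_diff)
  then have "complex_of_real (real (K+1) * fejcr K n) = complex_of_real (real (Suc K - n))" by simp
  then show ?thesis unfolding fejc_def by simp
qed

lemma Fej_meas[measurable]: "Fej K \<in> borel_measurable borel"
  unfolding Fej_def by measurable

lemma ZL1T_Fej: "Fej K \<in> ZL1T"
  unfolding Fej_def by (rule ZL1T_sum) (rule ZL1T_pp)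

definition fejr :: "nat \<Rightarrow> complex \<Rightarrow> real" where
  "fejr K x = (cmod (\<Sum>i<Suc K. x^i))^2 / real (K+1)"

lemma fejr_nonneg: "fejr K x \<ge> 0" unfolding fejr_def by simp

lemma Fej_square:
  assumes x: "cmod x = 1"
  shows "Fej K x = of_real (fejr K x)"
proof -
  have x0: "x \<noteq> 0" using x by auto
  have ix: "inverse x = cnj x" using x by (simp add: inverse_eq_divide complex_div_cnj[of 1 x] )
  have 1: "(\<Sum>i<Suc K. x^i) * (\<Sum>j<Suc K. (inverse x)^j) = of_real ((cmod (\<Sum>i<Suc K. x^i))^2)"
  proof -
    have "(\<Sum>j<Suc K. (cnj x)^j) = cnj (\<Sum>i<Suc K. x^i)" by simp
    then show ?thesis unfolding ix by (simp only: complex_norm_square)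
  qed
  have 2: "(\<Sum>k<Suc K. of_nat (Suc K - k) * pp k x) = of_nat (K+1) * Fej K x"
    unfolding Fej_def sum_distrib_left lessThan_Suc_atMost[symmetric]
  proof (intro sum.cong refl)
    fix k assume "k \<in> {..<Suc K}"
    then have "of_nat (K+1) * fejc K k = of_nat (Suc K - k)" by (intro fejc_mult) simp
    then show "of_nat (Suc K - k) * pp k x = of_nat (K+1) * (fejc K k * pp k x)" by (metis mult.assoc)
  qed
  have "of_nat (K+1) * Fej K x = of_real ((cmod (\<Sum>i<Suc K. x^i))^2)"
    using 1 2 double_geo[OF x0, of "Suc K"] by simp
  moreover have nz: "(of_nat (K+1) :: complex) \<noteq> 0" by (simp only: of_nat_eq_0_iff)
  ultimately have "Fej K x = of_real ((cmod (\<Sum>i<Suc K. x^i))^2) / of_nat (K+1)"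
    by (metis nonzero_mult_div_cancel_left)
  then show ?thesis unfolding fejr_def by simp
qed

lemma Fej_nonneg: "cmod x = 1 \<Longrightarrow> Re (Fej K x) \<ge> 0"
  by (simp only: Fej_square Re_complex_of_real fejr_nonneg)

lemma Fej_norm: "cmod x = 1 \<Longrightarrow> cmod (Fej K x) = Re (Fej K x)"
  by (simp only: Fej_square Re_complex_of_real norm_of_real) (simp add: fejr_nonneg)

lemma Fej_real: "cmod x = 1 \<Longrightarrow> Fej K x = of_real (Re (Fej K x))"
  by (simp only: Fej_square Re_complex_of_real)

lemma Fej_bound_away:
  assumes x: "cmod x = 1" and x1: "x \<noteq> 1"
  shows "Re (Fej K x) \<le> 4 / (real (K+1) * (cmod (1 - x))^2)"
proof -
  have pos: "cmod (1 - x) > 0" using x1 by auto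
  have "(1 - x) * (\<Sum>i<Suc K. x^i) = 1 - x^Suc K" by (rule one_diff_power_eq[symmetric])
  then have "cmod (1 - x) * cmod (\<Sum>i<Suc K. x^i) = cmod (1 - x^Suc K)"
    by (metis norm_mult)
  also have "\<dots> \<le> 2" using norm_triangle_ineq4[of 1 "x^Suc K"] x by (simp add: norm_power norm_mult)
  finally have "cmod (\<Sum>i<Suc K. x^i) \<le> 2 / cmod (1 - x)" using pos by (simp add: field_simps)
  then have "(cmod (\<Sum>i<Suc K. x^i))^2 \<le> (2 / cmod (1 - x))^2"
    by (intro power_mono) auto
  then have "(cmod (\<Sum>i<Suc K. x^i))^2 / real (K+1) \<le> 4 / (cmod (1-x))^2 / real (K+1)"
    by (intro divide_right_mono) (auto simp: power_divide)
  then show ?thesis using Fej_square[OF x, of K] unfolding fejr_def by (simp add: field_simps)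
qed

lemma integral_pp: "(\<integral>t. pp n t \<partial>haarT) = (if n = 0 then 1 else 0)"
  using coef_pp[of n 0] unfolding coef_def by (cases "n = 0") auto

lemma integrable_pp: "integrable haarT (pp n)"
  by (rule ZL1T_D(2)[OF ZL1T_pp])

lemma integral_Fej: "(\<integral>t. Fej K t \<partial>haarT) = 1"
proof -
  have "(\<integral>t. Fej K t \<partial>haarT) = (\<Sum>n\<le>K. fejc K n * (\<integral>t. pp n t \<partial>haarT))"
    unfolding Fej_def by (simp add: integrable_pp)
  also have "\<dots> = (\<Sum>n\<le>K. if n = 0 then 1 else 0)" by (intro sum.cong) (auto simp: integral_pp)
  finally show ?thesis by simp
qed

lemma Fej_bdd: "cmod x = 1 \<Longrightarrow> cmod (Fej K x) \<le> 2 * real (K+1)"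
proof -
  assume x: "cmod x = 1"
  have "cmod (Fej K x) \<le> (\<Sum>n\<le>K. cmod (fejc K n * pp n x))" unfolding Fej_def by (rule norm_sum)
  also have "\<dots> \<le> (\<Sum>n\<le>K. 2)"
  proof (intro sum_mono)
    fix n assume "n \<in> {..K}"
    have "cmod (fejc K n) \<le> 1" by (rule norm_fejc)
    then have "cmod (fejc K n) * cmod (pp n x) \<le> 1 * 2"
      using pp_bound[OF x, of n] by (intro mult_mono) auto
    then show "cmod (fejc K n * pp n x) \<le> 2" unfolding norm_mult by simp
  qed
  finally show ?thesis by simp
qed

definition Dn :: "cfun \<Rightarrow> bool" where
  "Dn a \<longleftrightarrow> (\<forall>\<eta>>0. \<exists>g. continuous_on UNIV g \<and> (\<integral>\<^sup>+x. ennreal (cmod (a x - g x)) \<partial>haarT) < ennreal \<eta>)"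

lemma emeasure_UNIV[simp]: "emeasure haarT UNIV = 1"
  using H.emeasure_space_1 by simp

lemma cont_meas: "continuous_on UNIV (g :: complex \<Rightarrow> complex) \<Longrightarrow> g \<in> borel_measurable borel"
  by (rule borel_measurable_continuous_onI)

lemma nn_tri:
  fixes f g h :: cfun
  assumes [measurable]: "f \<in> borel_measurable borel" "g \<in> borel_measurable borel" "h \<in> borel_measurable borel"
  shows "(\<integral>\<^sup>+x. ennreal (cmod (f x - h x)) \<partial>haarT) \<le>
     (\<integral>\<^sup>+x. ennreal (cmod (f x - g x)) \<partial>haarT) + (\<integral>\<^sup>+x. ennreal (cmod (g x - h x)) \<partial>haarT)"
proof -
  have "(\<integral>\<^sup>+x. ennreal (cmod (f x - h x)) \<partial>haarT) \<le>
      (\<integral>\<^sup>+x. ennreal (cmod (f x - g x)) + ennreal (cmod (g x - h x)) \<partial>haarT)"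
  proof (intro nn_integral_mono)
    fix x
    have "cmod (f x - h x) \<le> cmod (f x - g x) + cmod (g x - h x)" by (rule norm_diff_triangle_ineq[of "f x" "g x" "g x" "h x", simplified])
    then show "ennreal (cmod (f x - h x)) \<le> ennreal (cmod (f x - g x)) + ennreal (cmod (g x - h x))"
      by (simp add: ennreal_plus[symmetric] del: ennreal_plus)
  qed
  also have "\<dots> = (\<integral>\<^sup>+x. ennreal (cmod (f x - g x)) \<partial>haarT) + (\<integral>\<^sup>+x. ennreal (cmod (g x - h x)) \<partial>haarT)"
    by (rule nn_integral_add) auto
  finally show ?thesis .
qed

lemma Dn_add:
  assumes "Dn f" "Dn h" and [measurable]: "f \<in> borel_measurable borel" "h \<in> borel_measurable borel"
  shows "Dn (\<lambda>x. f x + h x)"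
  unfolding Dn_def
proof (intro allI impI)
  fix \<eta> :: real assume e: "\<eta> > 0"
  obtain g1 where g1: "continuous_on UNIV g1" "(\<integral>\<^sup>+x. ennreal (cmod (f x - g1 x)) \<partial>haarT) < ennreal (\<eta>/2)"
    using assms(1) e unfolding Dn_def by (meson half_gt_zero)
  obtain g2 where g2: "continuous_on UNIV g2" "(\<integral>\<^sup>+x. ennreal (cmod (h x - g2 x)) \<partial>haarT) < ennreal (\<eta>/2)"
    using assms(2) e unfolding Dn_def by (meson half_gt_zero)
  note [measurable] = cont_meas[OF g1(1)] cont_meas[OF g2(1)]
  have "(\<integral>\<^sup>+x. ennreal (cmod ((f x + h x) - (g1 x + g2 x))) \<partial>haarT) \<le>
     (\<integral>\<^sup>+x. ennreal (cmod (f x - g1 x)) + ennreal (cmod (h x - g2 x)) \<partial>haarT)"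
  proof (intro nn_integral_mono)
    fix x
    have "cmod ((f x + h x) - (g1 x + g2 x)) \<le> cmod (f x - g1 x) + cmod (h x - g2 x)"
      using norm_triangle_ineq[of "f x - g1 x" "h x - g2 x"] by (simp add: algebra_simps)
    then show "ennreal (cmod ((f x + h x) - (g1 x + g2 x))) \<le> ennreal (cmod (f x - g1 x)) + ennreal (cmod (h x - g2 x))"
      by (simp add: ennreal_plus[symmetric] del: ennreal_plus)
  qed
  also have "\<dots> = (\<integral>\<^sup>+x. ennreal (cmod (f x - g1 x)) \<partial>haarT) + (\<integral>\<^sup>+x. ennreal (cmod (h x - g2 x)) \<partial>haarT)"
    by (rule nn_integral_add) auto
  also have "\<dots> < ennreal (\<eta>/2) + ennreal (\<eta>/2)" by (rule add_strict_mono[OF g1(2) g2(2)])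
  also have "\<dots> = ennreal \<eta>" using e by (simp add: ennreal_plus[symmetric] del: ennreal_plus)
  finally show "\<exists>g. continuous_on UNIV g \<and> (\<integral>\<^sup>+x. ennreal (cmod (f x + h x - g x)) \<partial>haarT) < ennreal \<eta>"
    using g1(1) g2(1) by (intro exI[of _ "\<lambda>x. g1 x + g2 x"]) (auto intro: continuous_intros)
qed

lemma Dn_lim:
  fixes f :: cfun and s :: "nat \<Rightarrow> cfun"
  assumes [measurable]: "f \<in> borel_measurable borel" "\<And>i. s i \<in> borel_measurable borel"
    and D: "\<And>i. Dn (s i)" and lim: "\<And>x. (\<lambda>i. s i x) \<longlonglongrightarrow> f x"
    and bd: "\<And>i x. norm (s i x) \<le> 2 * norm (f x)" and int: "integrable haarT f"
  shows "Dn f"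
  unfolding Dn_def
proof (intro allI impI)
  fix \<eta> :: real assume e: "\<eta> > 0"
  have "(\<lambda>i. (\<integral>\<^sup>+x. norm (f x - s i x) \<partial>haarT)) \<longlonglongrightarrow> 0"
  proof (rule nn_integral_dominated_convergence_norm[where w="\<lambda>x. 2 * norm (f x)"])
    show "(\<integral>\<^sup>+x. ennreal (2 * norm (f x)) \<partial>haarT) < \<infinity>"
      using int unfolding integrable_iff_bounded by (simp add: ennreal_mult nn_integral_cmult ennreal_mult_less_top)
  qed (auto simp: bd lim)
  then have "eventually (\<lambda>i. (\<integral>\<^sup>+x. norm (f x - s i x) \<partial>haarT) < ennreal (\<eta>/2)) sequentially"
    using e by (intro order_tendstoD(2)) auto
  then obtain i where i: "(\<integral>\<^sup>+x. ennreal (cmod (f x - s i x)) \<partial>haarT) < ennreal (\<eta>/2)"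
    by (auto simp: eventually_sequentially)
  obtain g where g: "continuous_on UNIV g" "(\<integral>\<^sup>+x. ennreal (cmod (s i x - g x)) \<partial>haarT) < ennreal (\<eta>/2)"
    using D[of i] e unfolding Dn_def by (meson half_gt_zero)
  note [measurable] = cont_meas[OF g(1)]
  have "(\<integral>\<^sup>+x. ennreal (cmod (f x - g x)) \<partial>haarT) \<le>
     (\<integral>\<^sup>+x. ennreal (cmod (f x - s i x)) \<partial>haarT) + (\<integral>\<^sup>+x. ennreal (cmod (s i x - g x)) \<partial>haarT)"
    by (rule nn_tri) auto
  also have "\<dots> < ennreal (\<eta>/2) + ennreal (\<eta>/2)" by (rule add_strict_mono[OF i g(2)])
  also have "\<dots> = ennreal \<eta>" using e by (simp add: ennreal_plus[symmetric] del: ennreal_plus)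
  finally show "\<exists>g. continuous_on UNIV g \<and> (\<integral>\<^sup>+x. ennreal (cmod (f x - g x)) \<partial>haarT) < ennreal \<eta>"
    using g(1) by blast
qed

lemma inner_reg_haarT:
  assumes A: "A \<in> sets borel" and e: "e > 0"
  shows "\<exists>K. K \<subseteq> A \<and> compact K \<and> emeasure haarT A < emeasure haarT K + ennreal e"
proof -
  have sup: "emeasure haarT A = (SUP K \<in> {K. K \<subseteq> A \<and> compact K}. emeasure haarT K)"
    by (rule inner_regular) (auto simp: A)
  have fin: "emeasure haarT A \<noteq> \<infinity>" by simp
  have ne: "{K. K \<subseteq> A \<and> compact K} \<noteq> {}" by auto
  obtain K where "K \<in> {K. K \<subseteq> A \<and> compact K}" "emeasure haarT A < emeasure haarT K + ennreal e"
    using SUP_approx_ennreal[OF e ne sup fin] by blast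
  then show ?thesis by blast
qed

lemma Dn_base:
  assumes A: "A \<in> sets borel"
  shows "Dn (\<lambda>x. indicator A x *\<^sub>R c)"
  unfolding Dn_def
proof (intro allI impI)
  fix \<eta> :: real assume eta: "\<eta> > 0"
  show "\<exists>g. continuous_on UNIV g \<and> (\<integral>\<^sup>+x. ennreal (cmod (indicator A x *\<^sub>R c - g x)) \<partial>haarT) < ennreal \<eta>"
  proof (cases "c = 0")
    case True then show ?thesis using eta by (intro exI[of _ "\<lambda>x. 0"]) auto
  next
    case False
    then have cpos: "cmod c > 0" by simp
    define e where "e = \<eta> / (2 * cmod c)"
    have e: "e > 0" unfolding e_def using eta cpos by simp
    obtain K where K: "K \<subseteq> A" "compact K" "emeasure haarT A < emeasure haarT K + ennreal (e/2)"
      using inner_reg_haarT[OF A, of "e/2"] e by auto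
    have Kb: "K \<in> sets borel" using K(2) by (simp add: borel_compact)
    have AK: "emeasure haarT (A - K) < ennreal (e/2)"
    proof -
      have "emeasure haarT A = emeasure haarT K + emeasure haarT (A - K)"
        using K(1) A Kb by (subst plus_emeasure) (auto simp: Un_absorb1)
      then show ?thesis using K(3) by (simp add: ennreal_add_left_cancel_less)
    qed
    define gj where "gj j x = (if K = {} then 0 else max 0 (1 - real j * infdist x K))" for j :: nat and x :: complex
    have gj_cont: "continuous_on UNIV (gj j)" for j
      unfolding gj_def by (cases "K = {}") (auto intro!: continuous_intros)
    note [measurable] = borel_measurable_continuous_onI[OF gj_cont]
    have gj_lim: "(\<lambda>j. gj j x) \<longlonglongrightarrow> indicator K x" for x
    proof (cases "K = {}")
      case True then show ?thesis unfolding gj_def by simp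
    next
      case Kne: False
      show ?thesis
      proof (cases "x \<in> K")
        case True
        then have "infdist x K = 0" by simp
        then show ?thesis using True Kne unfolding gj_def by simp
      next
        case xK: False
        have d: "infdist x K > 0" using xK Kne compact_imp_closed[OF K(2)]
          by (metis in_closed_iff_infdist_zero infdist_nonneg less_eq_real_def)
        obtain N :: nat where N: "real N * infdist x K \<ge> 1"
          using reals_Archimedean3[OF d] by (meson less_imp_le)
        have "eventually (\<lambda>j. gj j x = 0) sequentially"
        proof (rule eventually_sequentiallyI[of N])
          fix j assume "N \<le> j"
          then have "real j * infdist x K \<ge> real N * infdist x K"
            using d by (intro mult_right_mono) auto
          then show "gj j x = 0" using N Kne unfolding gj_def by simp
        qed
        then show ?thesis using xK by (simp add: tendsto_eventually)
      qed
    qed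
    have gj_bd: "norm (gj j x) \<le> 1" for j x
      unfolding gj_def by (auto simp: infdist_nonneg)
    have "(\<lambda>j. (\<integral>\<^sup>+x. norm (indicator K x - gj j x) \<partial>haarT)) \<longlonglongrightarrow> 0"
    proof (rule nn_integral_dominated_convergence_norm[where w="\<lambda>x. 1"])
      show "(\<integral>\<^sup>+x. ennreal 1 \<partial>haarT) < \<infinity>" by simp
    qed (use Kb gj_bd gj_lim in auto)
    then have "eventually (\<lambda>j. (\<integral>\<^sup>+x. norm (indicator K x - gj j x) \<partial>haarT) < ennreal (e/2)) sequentially"
      using e by (intro order_tendstoD(2)) auto
    then obtain j where j: "(\<integral>\<^sup>+x. ennreal (norm (indicator K x - gj j x)) \<partial>haarT) < ennreal (e/2)"
      by (auto simp: eventually_sequentially)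
    define g where "g x = c * complex_of_real (gj j x)" for x
    have g_cont: "continuous_on UNIV g" unfolding g_def by (intro continuous_intros gj_cont)
    have pw: "ennreal (cmod (indicator A x *\<^sub>R c - g x)) \<le>
        ennreal (cmod c) * (indicator (A - K) x + ennreal (norm (indicator K x - gj j x)))" for x
    proof -
      have "indicator A x *\<^sub>R c - g x = c * of_real (indicator A x - gj j x)"
        unfolding g_def by (simp add: scaleR_conv_of_real algebra_simps)
      then have "cmod (indicator A x *\<^sub>R c - g x) = cmod c * \<bar>indicator A x - gj j x\<bar>"
        by (simp only: norm_mult norm_of_real)
      also have "\<bar>indicator A x - gj j x\<bar> \<le> indicator (A - K) x + \<bar>indicator K x - gj j x\<bar>"
        using K(1) by (auto simp: indicator_def)
      finally have "cmod (indicator A x *\<^sub>R c - g x) \<le> cmod c * (indicator (A - K) x + \<bar>indicator K x - gj j x\<bar>)"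
        using cpos by (simp add: mult_left_mono)
      then have le: "ennreal (cmod (indicator A x *\<^sub>R c - g x)) \<le> ennreal (cmod c * (indicator (A - K) x + \<bar>indicator K x - gj j x\<bar>))"
        by (rule ennreal_leI)
      have eq: "ennreal (cmod c * (indicator (A - K) x + \<bar>indicator K x - gj j x\<bar>)) =
          ennreal (cmod c) * (indicator (A - K) x + ennreal (norm (indicator K x - gj j x)))"
        by (simp add: ennreal_mult ennreal_indicator)
      show ?thesis using le unfolding eq .
    qed
    have "(\<integral>\<^sup>+x. ennreal (cmod (indicator A x *\<^sub>R c - g x)) \<partial>haarT) \<le>
        (\<integral>\<^sup>+x. ennreal (cmod c) * (indicator (A - K) x + ennreal (norm (indicator K x - gj j x))) \<partial>haarT)"
      by (intro nn_integral_mono pw)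
    also have "\<dots> = ennreal (cmod c) * (emeasure haarT (A - K) + (\<integral>\<^sup>+x. ennreal (norm (indicator K x - gj j x)) \<partial>haarT))"
      using A Kb by (simp add: nn_integral_cmult nn_integral_add)
    also have "\<dots> \<le> ennreal (cmod c) * (ennreal (e/2) + ennreal (e/2))"
      using AK j by (intro mult_left_mono add_mono) auto
    also have "\<dots> = ennreal (\<eta>/2)"
      using e cpos unfolding e_def by (simp add: ennreal_mult[symmetric] ennreal_plus[symmetric] del: ennreal_plus)
    also have "\<dots> < ennreal \<eta>" using eta by (simp add: ennreal_lessI)
    finally show ?thesis using g_cont by blast
  qed
qed

lemma density:
  assumes "integrable haarT a"
  shows "Dn a"
  using assms
proof (induction rule: integrable_induct)
  case (base A c)
  then show ?case by (intro Dn_base) simp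
next
  case (add f g)
  then show ?case by (intro Dn_add) auto
next
  case (lim f s)
  then show ?case by (intro Dn_lim[of f s]) auto
qed

lemma trans_cont:
  assumes int: "integrable haarT a" and eta: "\<eta> > 0"
  shows "\<exists>\<delta>>0. \<forall>s. cmod s = 1 \<longrightarrow> cmod (1 - s) < \<delta> \<longrightarrow>
           (\<integral>\<^sup>+x. ennreal (cmod (a (s * x) - a x)) \<partial>haarT) \<le> ennreal \<eta>"
proof -
  have am[measurable]: "a \<in> borel_measurable borel" using borel_measurable_integrable[OF int] by simp
  have e3: "\<eta>/3 > 0" using eta by simp
  obtain g where g: "continuous_on UNIV g" "(\<integral>\<^sup>+x. ennreal (cmod (a x - g x)) \<partial>haarT) < ennreal (\<eta>/3)"
    using density[OF int] e3 unfolding Dn_def by blast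
  note gm[measurable] = cont_meas[OF g(1)]
  have "uniformly_continuous_on (sphere 0 1) g"
    by (rule compact_uniformly_continuous) (auto intro: continuous_on_subset[OF g(1)])
  then obtain d where d: "d > 0" "\<And>x x'. x \<in> sphere 0 1 \<Longrightarrow> x' \<in> sphere 0 1 \<Longrightarrow> dist x' x < d \<Longrightarrow> dist (g x') (g x) < \<eta>/3"
    unfolding uniformly_continuous_on_def using e3 by metis
  show ?thesis
  proof (intro exI[of _ d] conjI allI impI)
    show "d > 0" by fact
    fix s :: complex assume s: "cmod s = 1" "cmod (1 - s) < d"
    have I1: "(\<integral>\<^sup>+x. ennreal (cmod (a (s * x) - g (s * x))) \<partial>haarT) = (\<integral>\<^sup>+x. ennreal (cmod (a x - g x)) \<partial>haarT)"
      by (rule nn_integral_rot[OF s(1)]) simp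
    have I3: "(\<integral>\<^sup>+x. ennreal (cmod (g x - a x)) \<partial>haarT) = (\<integral>\<^sup>+x. ennreal (cmod (a x - g x)) \<partial>haarT)"
      by (simp add: norm_minus_commute)
    have I2: "(\<integral>\<^sup>+x. ennreal (cmod (g (s * x) - g x)) \<partial>haarT) \<le> ennreal (\<eta>/3)"
    proof -
      have "(\<integral>\<^sup>+x. ennreal (cmod (g (s * x) - g x)) \<partial>haarT) \<le> (\<integral>\<^sup>+x. ennreal (\<eta>/3) \<partial>haarT)"
      proof (rule nn_integral_mono_AE)
        show "AE x in haarT. ennreal (cmod (g (s * x) - g x)) \<le> ennreal (\<eta>/3)"
          using AE_circle
        proof eventually_elim
          fix x :: complex assume x: "cmod x = 1"
          have "dist (s * x) x = cmod x * cmod (s - 1)"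
            by (simp add: dist_norm norm_mult[symmetric] algebra_simps)
          also have "\<dots> < d" using x s by (simp add: norm_minus_commute)
          finally have "dist (g (s * x)) (g x) < \<eta>/3"
            using x s by (intro d(2)) (auto simp: norm_mult)
          then show "ennreal (cmod (g (s * x) - g x)) \<le> ennreal (\<eta>/3)"
            by (intro ennreal_leI) (simp add: dist_norm)
        qed
      qed
      also have "\<dots> = ennreal (\<eta>/3)" by simp
      finally show ?thesis .
    qed
    have "(\<integral>\<^sup>+x. ennreal (cmod (a (s * x) - a x)) \<partial>haarT) \<le>
       (\<integral>\<^sup>+x. ennreal (cmod (a (s * x) - g (s * x))) \<partial>haarT) + (\<integral>\<^sup>+x. ennreal (cmod (g (s * x) - a x)) \<partial>haarT)"
      by (rule nn_tri) auto
    also have "(\<integral>\<^sup>+x. ennreal (cmod (g (s * x) - a x)) \<partial>haarT) \<le>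
       (\<integral>\<^sup>+x. ennreal (cmod (g (s * x) - g x)) \<partial>haarT) + (\<integral>\<^sup>+x. ennreal (cmod (g x - a x)) \<partial>haarT)"
      by (rule nn_tri) auto
    finally have "(\<integral>\<^sup>+x. ennreal (cmod (a (s * x) - a x)) \<partial>haarT) \<le>
       ennreal (\<eta>/3) + (ennreal (\<eta>/3) + ennreal (\<eta>/3))"
      unfolding I1 I3 using g(2) I2 by (smt (verit) add_mono add_left_mono less_imp_le order_trans)
    also have "\<dots> = ennreal \<eta>" using eta by (simp add: ennreal_plus[symmetric] del: ennreal_plus)
    finally show "(\<integral>\<^sup>+x. ennreal (cmod (a (s * x) - a x)) \<partial>haarT) \<le> ennreal \<eta>" .
  qed
qed

lemma sfm_haarT: "sigma_finite_measure haarT" by (rule H.sigma_finite_measure_axioms)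

interpretation PP: pair_sigma_finite haarT haarT
  by (intro pair_sigma_finite.intro sfm_haarT)

lemma integrable_Fej: "integrable haarT (Fej K)" by (rule ZL1T_D(2)[OF ZL1T_Fej])

lemma nn_Fej: "(\<integral>\<^sup>+t. ennreal (Re (Fej K t)) \<partial>haarT) = 1"
proof -
  have "(\<integral>\<^sup>+t. ennreal (Re (Fej K t)) \<partial>haarT) = ennreal (\<integral>t. Re (Fej K t) \<partial>haarT)"
    by (rule nn_integral_eq_integral) (auto intro: integrable_Fej eventually_mono[OF AE_circle] Fej_nonneg)
  also have "(\<integral>t. Re (Fej K t) \<partial>haarT) = 1" using integral_Fej[of K] integrable_Fej[of K] by simp
  finally show ?thesis by simp
qed

lemma conv_pointwise:
  assumes a: "a \<in> ZL1T" and x: "cmod x = 1"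
  shows "ennreal (cmod (convT (Fej K) a x - a x)) \<le>
    (\<integral>\<^sup>+t. ennreal (Re (Fej K t)) * ennreal (cmod (a (x * inverse t) - a x)) \<partial>haarT)"
proof -
  note aD = ZL1T_D[OF a]
  note am[measurable] = aD(1)
  have ia: "integrable haarT (\<lambda>t. a (x * inverse t))" using integrable_inv[OF x am] aD(2) by simp
  have i1: "integrable haarT (\<lambda>t. a (x * inverse t) * Fej K t)"
  proof (rule Bochner_Integration.integrable_bound[where f="\<lambda>t. (2 * real (K+1)) *\<^sub>R a (x * inverse t)"])
    show "integrable haarT (\<lambda>t. (2 * real (K+1)) *\<^sub>R a (x * inverse t))" using ia by simp
    show "AE t in haarT. norm (a (x * inverse t) * Fej K t) \<le> norm ((2 * real (K+1)) *\<^sub>R a (x * inverse t))"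
      using AE_circle
    proof eventually_elim
      fix t :: complex assume t: "cmod t = 1"
      have "cmod (a (x * inverse t)) * cmod (Fej K t) \<le> cmod (a (x * inverse t)) * (2 * real (K+1))"
        by (rule mult_left_mono[OF Fej_bdd[OF t]]) simp
      then show "norm (a (x * inverse t) * Fej K t) \<le> norm ((2 * real (K+1)) *\<^sub>R a (x * inverse t))"
        by (simp add: norm_mult mult.commute)
    qed
  qed simp
  have i2: "integrable haarT (\<lambda>t. Fej K t * a x)" using integrable_Fej by simp
  have c1: "convT (Fej K) a x = (\<integral>t. a (x * inverse t) * Fej K t \<partial>haarT)"
    using convT_comm[OF x Fej_meas am] unfolding convT_def by simp
  have c2: "a x = (\<integral>t. Fej K t * a x \<partial>haarT)" using integrable_Fej[of K] integral_Fej[of K] by simp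
  have "convT (Fej K) a x - a x = (\<integral>t. a (x * inverse t) * Fej K t - Fej K t * a x \<partial>haarT)"
    unfolding c1 using c2 i1 i2 by simp
  then have "ennreal (cmod (convT (Fej K) a x - a x)) \<le>
      (\<integral>\<^sup>+t. ennreal (norm (a (x * inverse t) * Fej K t - Fej K t * a x)) \<partial>haarT)"
    using integral_norm_bound_ennreal[OF Bochner_Integration.integrable_diff[OF i1 i2]] by simp
  also have "\<dots> = (\<integral>\<^sup>+t. ennreal (Re (Fej K t)) * ennreal (cmod (a (x * inverse t) - a x)) \<partial>haarT)"
  proof (rule nn_integral_cong_AE)
    show "AE t in haarT. ennreal (norm (a (x * inverse t) * Fej K t - Fej K t * a x)) =
        ennreal (Re (Fej K t)) * ennreal (cmod (a (x * inverse t) - a x))"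
      using AE_circle
    proof eventually_elim
      fix t :: complex assume t: "cmod t = 1"
      have "norm (a (x * inverse t) * Fej K t - Fej K t * a x) = cmod (Fej K t) * cmod (a (x * inverse t) - a x)"
        by (simp add: norm_mult[symmetric] algebra_simps)
      also have "\<dots> = Re (Fej K t) * cmod (a (x * inverse t) - a x)" using Fej_norm[OF t] by simp
      finally show "ennreal (norm (a (x * inverse t) * Fej K t - Fej K t * a x)) =
        ennreal (Re (Fej K t)) * ennreal (cmod (a (x * inverse t) - a x))"
        using Fej_nonneg[OF t] by (simp add: ennreal_mult)
    qed
  qed
  finally show ?thesis .
qed

lemma approx_id:
  assumes a: "a \<in> ZL1T" and eps: "\<epsilon> > 0"
  shows "\<exists>K0. \<forall>K\<ge>K0. (\<integral>x. cmod (convT (Fej K) a x - a x) \<partial>haarT) < \<epsilon>"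
proof -
  note aD = ZL1T_D[OF a]
  note am[measurable] = aD(1)
  define Nr where "Nr = (\<integral>x. cmod (a x) \<partial>haarT)"
  have Nr: "(\<integral>\<^sup>+x. ennreal (cmod (a x)) \<partial>haarT) = ennreal Nr" "Nr \<ge> 0"
    unfolding Nr_def using aD(2) by (auto intro!: nn_integral_eq_integral)
  define \<eta> where "\<eta> = \<epsilon> / 3"
  have eta: "\<eta> > 0" unfolding \<eta>_def using eps by simp
  obtain \<delta> where d: "\<delta> > 0" "\<And>s. cmod s = 1 \<Longrightarrow> cmod (1 - s) < \<delta> \<Longrightarrow>
           (\<integral>\<^sup>+x. ennreal (cmod (a (s * x) - a x)) \<partial>haarT) \<le> ennreal \<eta>"
    using trans_cont[OF aD(2) eta] by blast
  obtain K0 :: nat where K0: "real K0 > 24 * Nr / (\<epsilon> * \<delta>^2)" using reals_Archimedean2 by blast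
  show ?thesis
  proof (intro exI[of _ K0] allI impI)
    fix K assume KK: "K0 \<le> K"
    define CK where "CK = 4 / (real (K+1) * \<delta>^2)"
    have CK: "CK \<ge> 0" unfolding CK_def by simp
    define G where "G x t = ennreal (Re (Fej K t)) * ennreal (cmod (a (x * inverse t) - a x))" for x t
    have Gm: "(\<lambda>(x, t). G x t) \<in> borel_measurable (haarT \<Otimes>\<^sub>M haarT)"
    proof -
      have "(\<lambda>(x, t). G x t) \<in> borel_measurable (borel \<Otimes>\<^sub>M (borel :: complex measure))"
        unfolding G_def by measurable
      then show ?thesis by (subst measurable_cong_sets[OF sets_pair_haarT2 refl])
    qed
    define \<omega> where "\<omega> t = (\<integral>\<^sup>+x. ennreal (cmod (a (x * inverse t) - a x)) \<partial>haarT)" for t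
    have step1: "(\<integral>\<^sup>+x. ennreal (cmod (convT (Fej K) a x - a x)) \<partial>haarT) \<le> (\<integral>\<^sup>+x. (\<integral>\<^sup>+t. G x t \<partial>haarT) \<partial>haarT)"
      unfolding G_def using AE_circle by (intro nn_integral_mono_AE) (auto elim!: eventually_mono intro: conv_pointwise[OF a])
    also have "\<dots> = (\<integral>\<^sup>+t. (\<integral>\<^sup>+x. G x t \<partial>haarT) \<partial>haarT)"
      using PP.Fubini'[OF Gm] by simp
    also have "\<dots> = (\<integral>\<^sup>+t. ennreal (Re (Fej K t)) * \<omega> t \<partial>haarT)"
      unfolding G_def \<omega>_def by (intro nn_integral_cong nn_integral_cmult) measurable
    also have "\<dots> \<le> (\<integral>\<^sup>+t. ennreal \<eta> * ennreal (Re (Fej K t)) + ennreal CK * (2 * ennreal Nr) \<partial>haarT)"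
    proof (rule nn_integral_mono_AE)
      show "AE t in haarT. ennreal (Re (Fej K t)) * \<omega> t \<le> ennreal \<eta> * ennreal (Re (Fej K t)) + ennreal CK * (2 * ennreal Nr)"
        using AE_circle
      proof eventually_elim
        fix t :: complex assume t: "cmod t = 1"
        have it: "cmod (inverse t) = 1" using t by (simp add: norm_inverse)
        have om: "\<omega> t = (\<integral>\<^sup>+x. ennreal (cmod (a (inverse t * x) - a x)) \<partial>haarT)"
          unfolding \<omega>_def by (simp add: mult.commute)
        have d1: "cmod (1 - inverse t) = cmod (1 - t)"
        proof -
          have t0: "t \<noteq> 0" using t by auto
          have "1 - inverse t = (t - 1) * inverse t" using t0 by (simp add: field_simps)
          then show ?thesis using t by (simp add: norm_mult norm_inverse norm_minus_commute)
        qed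
        show "ennreal (Re (Fej K t)) * \<omega> t \<le> ennreal \<eta> * ennreal (Re (Fej K t)) + ennreal CK * (2 * ennreal Nr)"
        proof (cases "cmod (1 - t) < \<delta>")
          case True
          then have "\<omega> t \<le> ennreal \<eta>" unfolding om using d(2)[OF it] d1 by simp
          then have "ennreal (Re (Fej K t)) * \<omega> t \<le> ennreal (Re (Fej K t)) * ennreal \<eta>"
            by (rule mult_left_mono) simp
          then show ?thesis by (simp add: mult.commute add_increasing2)
        next
          case False
          then have t1: "t \<noteq> 1" using d(1) by auto
          have "Re (Fej K t) \<le> 4 / (real (K+1) * (cmod (1 - t))^2)" by (rule Fej_bound_away[OF t t1])
          also have "\<dots> \<le> CK"
          proof -
            have p1: "0 < real (K+1) * \<delta>^2" using d(1) by simp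
            have "cmod (1 - t) > 0" using False d(1) by linarith
            then have p2: "0 < real (K+1) * (cmod (1 - t))^2" by simp
            have le: "real (K+1) * \<delta>^2 \<le> real (K+1) * (cmod (1 - t))^2"
              using False d(1) by (intro mult_left_mono power_mono) auto
            show ?thesis unfolding CK_def
              by (rule divide_left_mono[OF le _ mult_pos_pos[OF p2 p1]]) simp
          qed
          finally have F: "ennreal (Re (Fej K t)) \<le> ennreal CK" by (rule ennreal_leI)
          have "\<omega> t \<le> (\<integral>\<^sup>+x. ennreal (cmod (a (inverse t * x))) + ennreal (cmod (a x)) \<partial>haarT)"
            unfolding om by (intro nn_integral_mono) (simp add: ennreal_plus[symmetric] norm_triangle_ineq4 del: ennreal_plus)
          also have "\<dots> = (\<integral>\<^sup>+x. ennreal (cmod (a (inverse t * x))) \<partial>haarT) + (\<integral>\<^sup>+x. ennreal (cmod (a x)) \<partial>haarT)"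
            by (rule nn_integral_add) auto
          also have "(\<integral>\<^sup>+x. ennreal (cmod (a (inverse t * x))) \<partial>haarT) = (\<integral>\<^sup>+x. ennreal (cmod (a x)) \<partial>haarT)"
            by (rule nn_integral_rot[OF it]) simp
          finally have W: "\<omega> t \<le> 2 * ennreal Nr" unfolding Nr by (simp add: mult_2)
          have "ennreal (Re (Fej K t)) * \<omega> t \<le> ennreal CK * (2 * ennreal Nr)"
            by (rule mult_mono[OF F W]) auto
          then show ?thesis by (simp add: add_increasing)
        qed
      qed
    qed
    also have "\<dots> = ennreal \<eta> * 1 + ennreal CK * (2 * ennreal Nr)"
      by (simp add: nn_integral_add nn_integral_cmult nn_Fej)
    also have "\<dots> = ennreal (\<eta> + CK * (2 * Nr))"
      using eta CK Nr(2) by (simp add: ennreal_mult ennreal_plus)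
    finally have fin: "(\<integral>\<^sup>+x. ennreal (cmod (convT (Fej K) a x - a x)) \<partial>haarT) \<le> ennreal (\<eta> + CK * (2 * Nr))" .
    have "CK * (2 * Nr) < \<epsilon> / 3"
    proof -
      have Kp: "real (K+1) > 24 * Nr / (\<epsilon> * \<delta>^2)" using K0 KK by linarith
      then have "real (K+1) * (\<epsilon> * \<delta>^2) > 24 * Nr" using eps d(1) by (simp add: field_simps)
      define D where "D = real (K+1) * \<delta>^2"
      have Dp: "D > 0" unfolding D_def using d(1) by simp
      have lt24: "24 * Nr < \<epsilon> * D" using \<open>real (K+1) * (\<epsilon> * \<delta>^2) > 24 * Nr\<close> unfolding D_def by (simp add: mult_ac)
      have "CK * (2 * Nr) = (8 * Nr) / D" unfolding CK_def D_def by simp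
      also have "\<dots> < \<epsilon> / 3" using Dp lt24 by (simp add: pos_divide_less_eq)
      finally show ?thesis .
    qed
    then have lt: "\<eta> + CK * (2 * Nr) < \<epsilon>" unfolding \<eta>_def using eps by linarith
    have "(\<integral>x. cmod (convT (Fej K) a x - a x) \<partial>haarT) = enn2real (\<integral>\<^sup>+x. ennreal (cmod (convT (Fej K) a x - a x)) \<partial>haarT)"
      by (rule integral_eq_nn_integral) auto
    also have "\<dots> \<le> enn2real (ennreal (\<eta> + CK * (2 * Nr)))"
      by (rule enn2real_mono[OF fin]) simp
    also have "\<dots> = \<eta> + CK * (2 * Nr)" using eta CK Nr(2) by (intro enn2real_ennreal) simp
    also have "\<dots> < \<epsilon>" by (rule lt)
    finally show "(\<integral>x. cmod (convT (Fej K) a x - a x) \<partial>haarT) < \<epsilon>" .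
  qed
qed

section \<open>Bilinear forms\<close>

lemma bil_add_left: "bilinear_on A \<phi> \<Longrightarrow> a \<in> A \<Longrightarrow> a' \<in> A \<Longrightarrow> b \<in> A \<Longrightarrow> \<phi> (\<lambda>x. a x + a' x) b = \<phi> a b + \<phi> a' b"
  unfolding bilinear_on_def by blast
lemma bil_add_right: "bilinear_on A \<phi> \<Longrightarrow> a \<in> A \<Longrightarrow> a' \<in> A \<Longrightarrow> b \<in> A \<Longrightarrow> \<phi> b (\<lambda>x. a x + a' x) = \<phi> b a + \<phi> b a'"
  unfolding bilinear_on_def by blast
lemma bil_mult_left: "bilinear_on A \<phi> \<Longrightarrow> a \<in> A \<Longrightarrow> b \<in> A \<Longrightarrow> \<phi> (\<lambda>x. c * a x) b = c * \<phi> a b"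
  unfolding bilinear_on_def by blast
lemma bil_mult_right: "bilinear_on A \<phi> \<Longrightarrow> a \<in> A \<Longrightarrow> b \<in> A \<Longrightarrow> \<phi> a (\<lambda>x. c * b x) = c * \<phi> a b"
  unfolding bilinear_on_def by blast

lemma bil_sum_left:
  assumes bil: "bilinear_on ZL1T \<phi>" and u: "\<And>i. i \<in> I \<Longrightarrow> u i \<in> ZL1T" and b: "b \<in> ZL1T"
  shows "\<phi> (\<lambda>x. \<Sum>i\<in>I. c i * u i x) b = (\<Sum>i\<in>I. c i * \<phi> (u i) b)"
  using u
proof (induction I rule: infinite_finite_induct)
  case (infinite I)
  have "\<phi> (\<lambda>x. 0) b = \<phi> (\<lambda>x. (\<lambda>x. 0) x + (\<lambda>x. 0) x) b" by simp
  also have "\<dots> = \<phi> (\<lambda>x. 0) b + \<phi> (\<lambda>x. 0) b" by (rule bil_add_left[OF bil ZL1T_zero ZL1T_zero b])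
  finally show ?case using infinite by simp
next
  case empty
  have "\<phi> (\<lambda>x. 0) b = \<phi> (\<lambda>x. (\<lambda>x. 0) x + (\<lambda>x. 0) x) b" by simp
  also have "\<dots> = \<phi> (\<lambda>x. 0) b + \<phi> (\<lambda>x. 0) b" by (rule bil_add_left[OF bil ZL1T_zero ZL1T_zero b])
  finally show ?case by simp
next
  case (insert i I)
  have ui: "u i \<in> ZL1T" using insert by simp
  have s1: "(\<lambda>x. c i * u i x) \<in> ZL1T" by (rule ZL1T_cmult[OF ui])
  have s2: "(\<lambda>x. \<Sum>i\<in>I. c i * u i x) \<in> ZL1T" using insert by (intro ZL1T_sum) auto
  have "\<phi> (\<lambda>x. \<Sum>i\<in>insert i I. c i * u i x) b = \<phi> (\<lambda>x. (\<lambda>x. c i * u i x) x + (\<lambda>x. \<Sum>i\<in>I. c i * u i x) x) b"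
    using insert by simp
  also have "\<dots> = \<phi> (\<lambda>x. c i * u i x) b + \<phi> (\<lambda>x. \<Sum>i\<in>I. c i * u i x) b"
    by (rule bil_add_left[OF bil s1 s2 b])
  also have "\<dots> = c i * \<phi> (u i) b + (\<Sum>i\<in>I. c i * \<phi> (u i) b)"
    using insert bil_mult_left[OF bil ui b] by simp
  finally show ?case using insert by simp
qed

lemma bil_sum_right:
  assumes bil: "bilinear_on ZL1T \<phi>" and u: "\<And>i. i \<in> I \<Longrightarrow> u i \<in> ZL1T" and b: "b \<in> ZL1T"
  shows "\<phi> b (\<lambda>x. \<Sum>i\<in>I. c i * u i x) = (\<Sum>i\<in>I. c i * \<phi> b (u i))"
  using u
proof (induction I rule: infinite_finite_induct)
  case (infinite I)
  have "\<phi> b (\<lambda>x. 0) = \<phi> b (\<lambda>x. (\<lambda>x. 0) x + (\<lambda>x. 0) x)" by simp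
  also have "\<dots> = \<phi> b (\<lambda>x. 0) + \<phi> b (\<lambda>x. 0)" by (rule bil_add_right[OF bil ZL1T_zero ZL1T_zero b])
  finally show ?case using infinite by simp
next
  case empty
  have "\<phi> b (\<lambda>x. 0) = \<phi> b (\<lambda>x. (\<lambda>x. 0) x + (\<lambda>x. 0) x)" by simp
  also have "\<dots> = \<phi> b (\<lambda>x. 0) + \<phi> b (\<lambda>x. 0)" by (rule bil_add_right[OF bil ZL1T_zero ZL1T_zero b])
  finally show ?case by simp
next
  case (insert i I)
  have ui: "u i \<in> ZL1T" using insert by simp
  have s1: "(\<lambda>x. c i * u i x) \<in> ZL1T" by (rule ZL1T_cmult[OF ui])
  have s2: "(\<lambda>x. \<Sum>i\<in>I. c i * u i x) \<in> ZL1T" using insert by (intro ZL1T_sum) auto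
  have "\<phi> b (\<lambda>x. \<Sum>i\<in>insert i I. c i * u i x) = \<phi> b (\<lambda>x. (\<lambda>x. c i * u i x) x + (\<lambda>x. \<Sum>i\<in>I. c i * u i x) x)"
    using insert by simp
  also have "\<dots> = \<phi> b (\<lambda>x. c i * u i x) + \<phi> b (\<lambda>x. \<Sum>i\<in>I. c i * u i x)"
    by (rule bil_add_right[OF bil s1 s2 b])
  also have "\<dots> = c i * \<phi> b (u i) + (\<Sum>i\<in>I. c i * \<phi> b (u i))"
    using insert bil_mult_right[OF bil b ui] by simp
  finally show ?case using insert by simp
qed

lemma bil_sum_both:
  assumes bil: "bilinear_on ZL1T \<phi>" and u: "\<And>i. i \<in> I \<Longrightarrow> u i \<in> ZL1T" and v: "\<And>j. j \<in> J \<Longrightarrow> v j \<in> ZL1T"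
  shows "\<phi> (\<lambda>x. \<Sum>i\<in>I. c i * u i x) (\<lambda>x. \<Sum>j\<in>J. d j * v j x) = (\<Sum>i\<in>I. \<Sum>j\<in>J. c i * d j * \<phi> (u i) (v j))"
proof -
  have vs: "(\<lambda>x. \<Sum>j\<in>J. d j * v j x) \<in> ZL1T" using v by (intro ZL1T_sum)
  have "\<phi> (\<lambda>x. \<Sum>i\<in>I. c i * u i x) (\<lambda>x. \<Sum>j\<in>J. d j * v j x) = (\<Sum>i\<in>I. c i * \<phi> (u i) (\<lambda>x. \<Sum>j\<in>J. d j * v j x))"
    by (rule bil_sum_left[OF bil u vs])
  also have "\<dots> = (\<Sum>i\<in>I. c i * (\<Sum>j\<in>J. d j * \<phi> (u i) (v j)))"
  proof (intro sum.cong refl)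
    fix i assume "i \<in> I"
    then have ui: "u i \<in> ZL1T" by (rule u)
    show "c i * \<phi> (u i) (\<lambda>x. \<Sum>j\<in>J. d j * v j x) = c i * (\<Sum>j\<in>J. d j * \<phi> (u i) (v j))"
      using bil_sum_right[OF bil v ui, where c=d] by simp
  qed
  also have "\<dots> = (\<Sum>i\<in>I. \<Sum>j\<in>J. c i * d j * \<phi> (u i) (v j))"
    by (simp add: sum_distrib_left mult_ac)
  finally show ?thesis .
qed

section \<open>Projective norm\<close>

lemma L1norm_nonneg: "L1norm f \<ge> 0" unfolding L1norm_def by simp

lemma proj_norm_le:
  assumes "set ys \<subseteq> ZL1T \<times> ZL1T" "tensor_eq ZL1T xs ys"
  shows "proj_norm ZL1T L1norm xs \<le> (\<Sum>(a,b)\<leftarrow>ys. L1norm a * L1norm b)"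
  unfolding proj_norm_def
proof (rule cInf_lower)
  show "(\<Sum>(a,b)\<leftarrow>ys. L1norm a * L1norm b) \<in> {(\<Sum>(a,b)\<leftarrow>ys. L1norm a * L1norm b) | ys. set ys \<subseteq> ZL1T \<times> ZL1T \<and> tensor_eq ZL1T xs ys}"
    using assms by blast
  show "bdd_below {(\<Sum>(a,b)\<leftarrow>ys. L1norm a * L1norm b) | ys. set ys \<subseteq> ZL1T \<times> ZL1T \<and> tensor_eq ZL1T xs ys}"
    by (rule bdd_belowI[of _ 0]) (auto intro!: sum_list_nonneg simp: L1norm_nonneg)
qed

lemma L1norm_null:
  assumes [measurable]: "f \<in> borel_measurable borel" and z: "\<And>x. cmod x = 1 \<Longrightarrow> f x = 0"
  shows "L1norm f = 0"
proof -
  have "(\<integral>x. cmod (f x) \<partial>haarT) = (\<integral>x. 0 \<partial>haarT)"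
    using AE_circle z by (intro integral_cong_AE) (auto elim: eventually_mono)
  then show ?thesis unfolding L1norm_def by simp
qed

definition DD :: "nat \<Rightarrow> (cfun \<times> cfun) list" where
  "DD N = map (\<lambda>n. (pp n, \<lambda>x. fejc N n * pp n x)) [0..<Suc N]"

lemma sum_list_upt0: "(\<Sum>n\<leftarrow>[0..<Suc N]. h n) = (\<Sum>n\<le>N. h n)"
proof (induction N)
  case (Suc N)
  have "(\<Sum>n\<leftarrow>[0..<Suc (Suc N)]. h n) = (\<Sum>n\<leftarrow>[0..<Suc N]. h n) + h (Suc N)"
    by (simp add: add.assoc)
  then show ?case using Suc by (simp add: atMost_Suc add.commute del: upt_Suc)
qed simp

lemma sum_DD: "(\<Sum>(a,b)\<leftarrow>DD N. f a b) = (\<Sum>n\<le>N. f (pp n) (\<lambda>x. fejc N n * pp n x))"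
  unfolding DD_def map_map comp_def prod.case by (rule sum_list_upt0)

lemma ZL1T_cpp: "(\<lambda>x. c * pp n x) \<in> ZL1T" by (rule ZL1T_cmult[OF ZL1T_pp])

lemma set_DD: "set (DD N) \<subseteq> ZL1T \<times> ZL1T"
  unfolding DD_def by (auto intro: ZL1T_pp ZL1T_cpp simp del: upt_Suc)

lemma coef_cpp: "coef (\<lambda>x. c * pp m x) n = c * coef (pp m) n"
  unfolding coef_def by (simp add: mult.assoc)

lemma convT_cmult_left: "convT (\<lambda>x. c * f x) g x = c * convT f g x"
  unfolding convT_def by (simp add: mult.assoc)

lemma tm_DD: "tensor_mult convT (DD N) = (\<lambda>x. \<Sum>n\<le>N. convT (pp n) (\<lambda>y. fejc N n * pp n y) x)"
  unfolding tensor_mult_def by (simp add: sum_DD)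

lemma tm_DD_meas[measurable]: "tensor_mult convT (DD N) \<in> borel_measurable borel"
  unfolding tm_DD by measurable

lemma tm_DD_eq: "x \<noteq> 0 \<Longrightarrow> tensor_mult convT (DD N) x = Fej N x"
  unfolding tm_DD Fej_def
  by (intro sum.cong refl) (simp add: convT_pp_left[OF ZL1T_cpp] coef_cpp coef_pp)

lemma conv_DD_left:
  assumes a: "a \<in> ZL1T"
  shows "L1norm (\<lambda>x. convT (tensor_mult convT (DD N)) a x - a x) = (\<integral>x. cmod (convT (Fej N) a x - a x) \<partial>haarT)"
proof -
  note am[measurable] = ZL1T_D(1)[OF a]
  have "convT (tensor_mult convT (DD N)) a x = convT (Fej N) a x" if x0: "x \<noteq> 0" for x
    unfolding convT_def[of "tensor_mult convT (DD N)" a] convT_def[of "Fej N" a]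
  proof (rule integral_cong_AE)
    show "AE t in haarT. tensor_mult convT (DD N) (x * inverse t) * a t = Fej N (x * inverse t) * a t"
      using AE_ne0 by eventually_elim (simp add: tm_DD_eq x0)
  qed auto
  then show ?thesis unfolding L1norm_def
    by (intro integral_cong_AE) (auto intro: eventually_mono[OF AE_ne0])
qed

lemma conv_DD_right:
  assumes a: "a \<in> ZL1T"
  shows "L1norm (\<lambda>x. convT a (tensor_mult convT (DD N)) x - a x) = (\<integral>x. cmod (convT (Fej N) a x - a x) \<partial>haarT)"
proof -
  note am[measurable] = ZL1T_D(1)[OF a]
  have "convT a (tensor_mult convT (DD N)) x = convT (Fej N) a x" if x: "cmod x = 1" for x
  proof -
    have "convT a (tensor_mult convT (DD N)) x = convT a (Fej N) x"
      unfolding convT_def[of a "tensor_mult convT (DD N)"] convT_def[of a "Fej N"]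
    proof (rule integral_cong_AE)
      show "AE t in haarT. a (x * inverse t) * tensor_mult convT (DD N) t = a (x * inverse t) * Fej N t"
        using AE_ne0 by eventually_elim (simp add: tm_DD_eq)
    qed auto
    also have "\<dots> = convT (Fej N) a x" by (rule convT_comm[OF x am Fej_meas])
    finally show ?thesis .
  qed
  then show ?thesis unfolding L1norm_def
    by (intro integral_cong_AE) (auto intro: eventually_mono[OF AE_circle])
qed

lemma comm_DD:
  assumes a: "a \<in> ZL1T"
  shows "proj_norm ZL1T L1norm (tensor_commutator convT a (DD N)) \<le> 0"
proof -
  note am[measurable] = ZL1T_D(1)[OF a]
  define c where "c n = fejc N n" for n
  define nu where "nu n = (\<lambda>x. convT a (pp n) x - coef a n * pp n x)" for n
  define nu' where "nu' n = (\<lambda>x. convT (\<lambda>y. c n * pp n y) a x - (c n * coef a n) * pp n x)" for n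
  have nu_z: "cmod x = 1 \<Longrightarrow> nu n x = 0" for n x unfolding nu_def by (simp add: convT_pp_right[OF a])
  have nu'_z: "cmod x = 1 \<Longrightarrow> nu' n x = 0" for n x
  proof -
    assume "cmod x = 1" then have "x \<noteq> 0" by auto
    then show "nu' n x = 0" unfolding nu'_def by (simp add: convT_cmult_left convT_pp_left[OF a])
  qed
  have nu_m[measurable]: "nu n \<in> borel_measurable borel" for n unfolding nu_def by measurable
  have nu'_m[measurable]: "nu' n \<in> borel_measurable borel" for n unfolding nu'_def by measurable
  have nuA: "nu n \<in> ZL1T" for n by (rule ZL1T_null[OF nu_m nu_z])
  have nu'A: "nu' n \<in> ZL1T" for n by (rule ZL1T_null[OF nu'_m nu'_z])
  define ys where "ys = map (\<lambda>n. (nu n, \<lambda>x. c n * pp n x)) [0..<Suc N] @ map (\<lambda>n. (\<lambda>x. - pp n x, nu' n)) [0..<Suc N]"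
  have ysA: "set ys \<subseteq> ZL1T \<times> ZL1T" unfolding ys_def
    by (auto intro: nuA nu'A ZL1T_cpp ZL1T_uminus[OF ZL1T_pp] simp del: upt_Suc)
  have teq: "tensor_eq ZL1T (tensor_commutator convT a (DD N)) ys"
    unfolding tensor_eq_def
  proof (intro allI impI)
    fix \<phi> assume bil: "bilinear_on ZL1T \<phi>"
    have trm: "\<phi> (convT a (pp n)) (\<lambda>x. c n * pp n x) + \<phi> (\<lambda>x. - pp n x) (convT (\<lambda>x. c n * pp n x) a)
       = \<phi> (nu n) (\<lambda>x. c n * pp n x) + \<phi> (\<lambda>x. - pp n x) (nu' n)" for n
    proof -
      have e1: "convT a (pp n) = (\<lambda>x. (\<lambda>x. coef a n * pp n x) x + nu n x)" unfolding nu_def by simp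
      have e2: "convT (\<lambda>x. c n * pp n x) a = (\<lambda>x. (\<lambda>x. (c n * coef a n) * pp n x) x + nu' n x)" unfolding nu'_def by simp
      have e3: "(\<lambda>x. - pp n x) = (\<lambda>x. (-1) * pp n x)" by simp
      have A1: "\<phi> (convT a (pp n)) (\<lambda>x. c n * pp n x) = coef a n * (c n * \<phi> (pp n) (pp n)) + \<phi> (nu n) (\<lambda>x. c n * pp n x)"
      proof -
        have "\<phi> (convT a (pp n)) (\<lambda>x. c n * pp n x) = \<phi> (\<lambda>x. coef a n * pp n x) (\<lambda>x. c n * pp n x) + \<phi> (nu n) (\<lambda>x. c n * pp n x)"
          unfolding e1 by (rule bil_add_left[OF bil ZL1T_cpp nuA ZL1T_cpp])
        also have "\<phi> (\<lambda>x. coef a n * pp n x) (\<lambda>x. c n * pp n x) = coef a n * (c n * \<phi> (pp n) (pp n))"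
          by (simp only: bil_mult_left[OF bil ZL1T_pp ZL1T_cpp] bil_mult_right[OF bil ZL1T_pp ZL1T_pp])
        finally show ?thesis .
      qed
      have A2: "\<phi> (\<lambda>x. - pp n x) (convT (\<lambda>x. c n * pp n x) a) = (c n * coef a n) * ((-1) * \<phi> (pp n) (pp n)) + \<phi> (\<lambda>x. - pp n x) (nu' n)"
      proof -
        have "\<phi> (\<lambda>x. - pp n x) (convT (\<lambda>x. c n * pp n x) a) = \<phi> (\<lambda>x. (-1) * pp n x) (\<lambda>x. (\<lambda>x. (c n * coef a n) * pp n x) x + nu' n x)"
          by (simp only: e2 e3)
        also have "\<dots> = \<phi> (\<lambda>x. (-1) * pp n x) (\<lambda>x. (c n * coef a n) * pp n x) + \<phi> (\<lambda>x. (-1) * pp n x) (nu' n)"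
          by (rule bil_add_right[OF bil ZL1T_cpp nu'A ZL1T_cpp])
        also have "\<phi> (\<lambda>x. (-1) * pp n x) (\<lambda>x. (c n * coef a n) * pp n x) = (c n * coef a n) * ((-1) * \<phi> (pp n) (pp n))"
          by (simp only: bil_mult_right[OF bil ZL1T_cpp ZL1T_pp] bil_mult_left[OF bil ZL1T_pp ZL1T_pp])
        also have "\<phi> (\<lambda>x. (-1) * pp n x) (nu' n) = \<phi> (\<lambda>x. - pp n x) (nu' n)" by (simp only: e3)
        finally show ?thesis .
      qed
      show ?thesis unfolding A1 A2 by (simp add: algebra_simps)
    qed
    have "(\<Sum>(x, y)\<leftarrow>tensor_commutator convT a (DD N). \<phi> x y) =
       (\<Sum>n\<le>N. \<phi> (convT a (pp n)) (\<lambda>x. c n * pp n x)) + (\<Sum>n\<le>N. \<phi> (\<lambda>x. - pp n x) (convT (\<lambda>x. c n * pp n x) a))"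
      unfolding tensor_commutator_def DD_def c_def by (simp add: comp_def sum_list_upt0 del: upt_Suc)
    also have "\<dots> = (\<Sum>n\<le>N. \<phi> (nu n) (\<lambda>x. c n * pp n x)) + (\<Sum>n\<le>N. \<phi> (\<lambda>x. - pp n x) (nu' n))"
      using trm by (simp add: sum.distrib[symmetric])
    also have "\<dots> = (\<Sum>(x, y)\<leftarrow>ys. \<phi> x y)"
      unfolding ys_def by (simp add: comp_def sum_list_upt0 del: upt_Suc)
    finally show "(\<Sum>(x, y)\<leftarrow>tensor_commutator convT a (DD N). \<phi> x y) = (\<Sum>(x, y)\<leftarrow>ys. \<phi> x y)" .
  qed
  have "proj_norm ZL1T L1norm (tensor_commutator convT a (DD N)) \<le> (\<Sum>(a,b)\<leftarrow>ys. L1norm a * L1norm b)"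
    by (rule proj_norm_le[OF ysA teq])
  also have "\<dots> = 0"
    unfolding ys_def by (simp add: comp_def L1norm_null[OF nu_m nu_z] L1norm_null[OF nu'_m nu'_z] del: upt_Suc)
  finally show ?thesis .
qed

lemma cos_sum0:
  fixes M j :: nat
  assumes j: "0 < j" "j < M"
  shows "(\<Sum>k<M. cos (2 * pi * real k * real j / real M)) = 0"
proof -
  define \<theta> where "\<theta> = 2 * pi * real j / real M"
  define z where "z = cis \<theta>"
  have Mpos: "real M > 0" using j by simp
  have th: "0 < \<theta>" "\<theta> < 2 * pi" unfolding \<theta>_def using j Mpos by (auto simp: field_simps)
  have z1: "z \<noteq> 1"
  proof
    assume "z = 1"
    then have "exp (\<i> * complex_of_real \<theta>) = 1" unfolding z_def cis_conv_exp by simp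
    then obtain n :: int where n: "\<theta> = of_int (2 * n) * pi" unfolding exp_eq_1 by auto
    have "0 < of_int (2 * n) * pi" "of_int (2 * n) * pi < 2 * pi" using th n by auto
    then have "0 < n" "n < 1" by (auto simp: zero_less_mult_iff mult_less_cancel_right2)
    then show False by simp
  qed
  have zM: "z ^ M = 1"
  proof -
    have "z ^ M = cis (real M * \<theta>)" unfolding z_def by (rule Complex.DeMoivre)
    also have "real M * \<theta> = 2 * pi * real j" unfolding \<theta>_def using Mpos by simp
    also have "cis (2 * pi * real j) = 1" by (rule cis_multiple_2pi) simp
    finally show ?thesis .
  qed
  have "(1 - z) * (\<Sum>k<M. z^k) = 0" using one_diff_power_eq[of z M] zM by simp
  then have S: "(\<Sum>k<M. z^k) = 0" using z1 by simp
  have "(\<Sum>k<M. cos (2 * pi * real k * real j / real M)) = Re (\<Sum>k<M. z^k)"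
    unfolding Re_sum z_def Complex.DeMoivre \<theta>_def by (intro sum.cong refl) (simp add: mult_ac)
  then show ?thesis using S by simp
qed

lemma cos_sum_nat:
  fixes M j :: nat
  assumes "j < M"
  shows "(\<Sum>k<M. cos (2 * pi * real k * real j / real M)) = (if j = 0 then real M else 0)"
  using cos_sum0[of j M] assms by auto

lemma cs_orth:
  fixes n m L M :: nat
  assumes nm: "n \<le> L" "m \<le> L" and LM: "2 * L < M"
  shows "(\<Sum>k<M. cos (2 * pi * real k * real n / real M) * cos (2 * pi * real k * real m / real M)) =
    (if n = m then (if n = 0 then real M else real M / 2) else 0)"
proof -
  define d where "d = (if n \<le> m then m - n else n - m)"
  have Mp: "real M > 0" using LM by simp
  have c1: "cos (2 * pi * real k * real n / real M) * cos (2 * pi * real k * real m / real M) =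
      (cos (2 * pi * real k * real d / real M) + cos (2 * pi * real k * real (n + m) / real M)) / 2" for k
  proof -
    have "cos (2 * pi * real k * real n / real M - 2 * pi * real k * real m / real M) = cos (2 * pi * real k * real d / real M)"
    proof (cases "n \<le> m")
      case True
      then have "2 * pi * real k * real n / real M - 2 * pi * real k * real m / real M = - (2 * pi * real k * real d / real M)"
        unfolding d_def using Mp by (simp add: of_nat_diff field_simps)
      then show ?thesis by simp
    next
      case False
      then have "2 * pi * real k * real n / real M - 2 * pi * real k * real m / real M = 2 * pi * real k * real d / real M"
        unfolding d_def using Mp by (simp add: of_nat_diff field_simps)
      then show ?thesis by simp
    qed
    moreover have "2 * pi * real k * real n / real M + 2 * pi * real k * real m / real M = 2 * pi * real k * real (n + m) / real M"
      using Mp by (simp add: field_simps)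
    ultimately show ?thesis by (simp add: cos_times_cos)
  qed
  have dM: "d < M" "n + m < M" using nm LM unfolding d_def by auto
  have "(\<Sum>k<M. cos (2 * pi * real k * real n / real M) * cos (2 * pi * real k * real m / real M)) =
      ((\<Sum>k<M. cos (2 * pi * real k * real d / real M)) + (\<Sum>k<M. cos (2 * pi * real k * real (n + m) / real M))) / 2"
    unfolding c1 by (simp only: sum_divide_distrib[symmetric] sum.distrib)
  also have "\<dots> = ((if d = 0 then real M else 0) + (if n + m = 0 then real M else 0)) / 2"
    using cos_sum_nat[OF dM(1)] cos_sum_nat[OF dM(2)] by simp
  also have "\<dots> = (if n = m then (if n = 0 then real M else real M / 2) else 0)"
    unfolding d_def by auto
  finally show ?thesis .
qed

definition MM :: "nat \<Rightarrow> nat" where "MM N = 4 * N + 4"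
definition LL :: "nat \<Rightarrow> nat" where "LL N = 2 * N + 1"
definition csr :: "nat \<Rightarrow> nat \<Rightarrow> nat \<Rightarrow> real" where
  "csr N k n = cos (2 * pi * real k * real n / real (MM N))"
definition Vg :: "nat \<Rightarrow> nat \<Rightarrow> nat \<Rightarrow> cfun" where
  "Vg N K k = (\<lambda>x. \<Sum>n\<le>K. (fejc K n * of_real (csr N k n)) * pp n x)"
definition wc :: "nat \<Rightarrow> nat \<Rightarrow> complex" where
  "wc N m = 2 * fejc (LL N) m - fejc N m"
definition W2 :: "nat \<Rightarrow> nat \<Rightarrow> cfun" where
  "W2 N k = (\<lambda>x. \<Sum>m\<le>LL N. (of_real (2 / real (MM N)) * wc N m * of_real (csr N k m)) * pp m x)"
definition YY :: "nat \<Rightarrow> (cfun \<times> cfun) list" where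
  "YY N = map (\<lambda>k. (Vg N N k, W2 N k)) [0..<MM N] @ [(\<lambda>x. -1, \<lambda>x. 1)]"

lemma ZL1T_Vg: "Vg N K k \<in> ZL1T" unfolding Vg_def by (intro ZL1T_sum ZL1T_pp)
lemma ZL1T_W2: "W2 N k \<in> ZL1T" unfolding W2_def by (intro ZL1T_sum ZL1T_pp)
lemma Vg_meas[measurable]: "Vg N K k \<in> borel_measurable borel" unfolding Vg_def by measurable

lemma set_YY: "set (YY N) \<subseteq> ZL1T \<times> ZL1T"
  unfolding YY_def using ZL1T_Vg ZL1T_W2 ZL1T_const by auto

lemma cis_plus_cis_neg: "cis a + cis (- a) = 2 * complex_of_real (cos a)"
  by (simp add: complex_eq_iff)

lemma pp_rot: "pp n (cis \<theta> * x) + pp n (cis (- \<theta>) * x) = 2 * complex_of_real (cos (real n * \<theta>)) * pp n x"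
proof (cases "n = 0")
  case True then show ?thesis by simp
next
  case False
  have d1: "cis \<theta> ^ n = cis (real n * \<theta>)" by (rule Complex.DeMoivre)
  have d2: "cis (- \<theta>) ^ n = cis (- (real n * \<theta>))" using Complex.DeMoivre[of "- \<theta>" n] by simp
  have d3: "inverse (cis \<theta>) ^ n = cis (- (real n * \<theta>))" using d2 by simp
  have d4: "inverse (cis (- \<theta>)) ^ n = cis (real n * \<theta>)" using d1 by simp
  have "pp n (cis \<theta> * x) + pp n (cis (- \<theta>) * x) =
     cis (real n * \<theta>) * x^n + cis (- (real n * \<theta>)) * (inverse x)^n +
     (cis (- (real n * \<theta>)) * x^n + cis (real n * \<theta>) * (inverse x)^n)"
    unfolding pp_def if_not_P[OF False] power_mult_distrib inverse_mult_distrib d1 d2 d3 d4 ..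
  also have "\<dots> = (cis (real n * \<theta>) + cis (- (real n * \<theta>))) * pp n x"
    using False unfolding pp_def by (simp add: algebra_simps)
  also have "\<dots> = 2 * complex_of_real (cos (real n * \<theta>)) * pp n x" by (simp only: cis_plus_cis_neg)
  finally show ?thesis .
qed

lemma Vg_rot:
  "Vg N K k x = (Fej K (cis (2 * pi * real k / real (MM N)) * x) + Fej K (cis (- (2 * pi * real k / real (MM N))) * x)) / 2"
proof -
  define \<theta> where "\<theta> = 2 * pi * real k / real (MM N)"
  have cs: "csr N k n = cos (real n * \<theta>)" for n unfolding csr_def \<theta>_def by (simp add: field_simps)
  have "Fej K (cis \<theta> * x) + Fej K (cis (- \<theta>) * x) = (\<Sum>n\<le>K. fejc K n * (pp n (cis \<theta> * x) + pp n (cis (- \<theta>) * x)))"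
    unfolding Fej_def by (simp add: sum.distrib[symmetric] distrib_left)
  also have "\<dots> = (\<Sum>n\<le>K. 2 * ((fejc K n * of_real (csr N k n)) * pp n x))"
  proof (intro sum.cong refl)
    fix n show "fejc K n * (pp n (cis \<theta> * x) + pp n (cis (- \<theta>) * x)) = 2 * ((fejc K n * of_real (csr N k n)) * pp n x)"
      unfolding pp_rot cs by (simp add: mult_ac)
  qed
  also have "\<dots> = 2 * Vg N K k x" unfolding Vg_def by (simp add: sum_distrib_left)
  finally show ?thesis unfolding \<theta>_def by simp
qed

lemma int_cmod_Fej_rot:
  assumes s: "cmod s = 1"
  shows "integrable haarT (\<lambda>x. cmod (Fej K (s * x)))" "(\<integral>x. cmod (Fej K (s * x)) \<partial>haarT) = 1"
proof -
  have b: "norm (cmod (Fej K (s * t))) \<le> 2 * real (K+1)" if t: "cmod t = 1" for t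
  proof -
    have "cmod (s * t) = 1" using s t by (simp add: norm_mult)
    then show ?thesis using Fej_bdd[of "s * t" K] by simp
  qed
  show "integrable haarT (\<lambda>x. cmod (Fej K (s * x)))"
    by (rule integrable_bdd[OF _ b]) simp
  have "(\<integral>x. cmod (Fej K (s * x)) \<partial>haarT) = (\<integral>x. cmod (Fej K x) \<partial>haarT)"
    by (rule integral_rot[OF s]) simp
  also have "\<dots> = (\<integral>x. Re (Fej K x) \<partial>haarT)"
    using AE_circle by (intro integral_cong_AE) (auto elim!: eventually_mono simp: Fej_norm)
  also have "\<dots> = 1" using integral_Fej[of K] integrable_Fej[of K] by simp
  finally show "(\<integral>x. cmod (Fej K (s * x)) \<partial>haarT) = 1" .
qed

lemma L1norm_Vg: "L1norm (Vg N K k) \<le> 1"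
proof -
  define s where "s = cis (2 * pi * real k / real (MM N))"
  define s' where "s' = cis (- (2 * pi * real k / real (MM N)))"
  have s: "cmod s = 1" "cmod s' = 1" unfolding s_def s'_def by auto
  note i1 = int_cmod_Fej_rot[OF s(1), of K] and i2 = int_cmod_Fej_rot[OF s(2), of K]
  have "L1norm (Vg N K k) \<le> (\<integral>x. (cmod (Fej K (s * x)) + cmod (Fej K (s' * x))) / 2 \<partial>haarT)"
    unfolding L1norm_def
  proof (rule integral_mono)
    show "integrable haarT (\<lambda>x. cmod (Vg N K k x))" using ZL1T_D(2)[OF ZL1T_Vg] by simp
    show "integrable haarT (\<lambda>x. (cmod (Fej K (s * x)) + cmod (Fej K (s' * x))) / 2)" using i1 i2 by simp
    fix x show "cmod (Vg N K k x) \<le> (cmod (Fej K (s * x)) + cmod (Fej K (s' * x))) / 2"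
      unfolding Vg_rot s_def[symmetric] s'_def[symmetric] by (simp add: norm_divide norm_triangle_ineq divide_right_mono)
  qed
  also have "\<dots> = 1" using i1 i2 by simp
  finally show ?thesis .
qed

lemma fejc_zero: "K < n \<Longrightarrow> fejc K n = 0" unfolding fejc_def fejcr_def by simp

lemma Vg_ext: "N \<le> L \<Longrightarrow> Vg N' N k x = (\<Sum>n\<le>L. (fejc N n * of_real (csr N' k n)) * pp n x)"
  unfolding Vg_def by (rule sum.mono_neutral_left) (auto simp: fejc_zero)

lemma W2_eq: "W2 N k x = of_real (2 / real (MM N)) * (2 * Vg N (LL N) k x - Vg N N k x)"
proof -
  have NL: "N \<le> LL N" unfolding LL_def by simp
  show ?thesis
    unfolding W2_def Vg_ext[OF NL, of N k x] unfolding Vg_def wc_def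
    by (simp add: sum_distrib_left sum_subtractf[symmetric] algebra_simps)
qed

lemma L1norm_W2: "L1norm (W2 N k) \<le> 6 / real (MM N)"
proof -
  define c where "c = 2 / real (MM N)"
  have c: "c > 0" unfolding c_def MM_def by simp
  have iV: "integrable haarT (\<lambda>x. cmod (Vg N K k x))" for K using ZL1T_D(2)[OF ZL1T_Vg] by simp
  have "L1norm (W2 N k) \<le> (\<integral>x. c * (2 * cmod (Vg N (LL N) k x) + cmod (Vg N N k x)) \<partial>haarT)"
    unfolding L1norm_def
  proof (rule integral_mono)
    show "integrable haarT (\<lambda>x. cmod (W2 N k x))" using ZL1T_D(2)[OF ZL1T_W2] by simp
    show "integrable haarT (\<lambda>x. c * (2 * cmod (Vg N (LL N) k x) + cmod (Vg N N k x)))" using iV by simp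
    fix x
    have "cmod (2 * Vg N (LL N) k x - Vg N N k x) \<le> 2 * cmod (Vg N (LL N) k x) + cmod (Vg N N k x)"
      using norm_triangle_ineq4[of "2 * Vg N (LL N) k x" "Vg N N k x"] by (simp add: norm_mult)
    then show "cmod (W2 N k x) \<le> c * (2 * cmod (Vg N (LL N) k x) + cmod (Vg N N k x))"
      unfolding W2_eq c_def[symmetric] using c by (simp add: norm_mult mult_left_mono)
  qed
  also have "\<dots> = c * (2 * L1norm (Vg N (LL N) k) + L1norm (Vg N N k))"
    unfolding L1norm_def using iV by simp
  also have "\<dots> \<le> c * (2 * 1 + 1)"
    using c L1norm_Vg by (intro mult_left_mono add_mono) auto
  also have "\<dots> = 6 / real (MM N)" unfolding c_def by simp
  finally show ?thesis .
qed

lemma L1norm_const: "L1norm (\<lambda>x. c) = cmod c"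
  unfolding L1norm_def by simp

lemma sum_YY_norm: "(\<Sum>(a,b)\<leftarrow>YY N. L1norm a * L1norm b) \<le> 7"
proof -
  have M0: "real (MM N) > 0" unfolding MM_def by simp
  have "(\<Sum>(a,b)\<leftarrow>YY N. L1norm a * L1norm b) = (\<Sum>k<MM N. L1norm (Vg N N k) * L1norm (W2 N k)) + 1"
    unfolding YY_def by (simp add: comp_def L1norm_const sum_list_distinct_conv_sum_set atLeast0LessThan)
  also have "(\<Sum>k<MM N. L1norm (Vg N N k) * L1norm (W2 N k)) \<le> (\<Sum>k<MM N. 1 * (6 / real (MM N)))"
    by (intro sum_mono mult_mono L1norm_Vg L1norm_W2 L1norm_nonneg) simp
  also have "\<dots> = 6" using M0 by simp
  finally show ?thesis by simp
qed

lemma wc_one: "n \<le> N \<Longrightarrow> wc N n = 1"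
proof -
  assume n: "n \<le> N"
  have e: "real (2 * N + 1 + 1) = 2 * real (N + 1)" by simp
  have e2: "real n / real (2 * N + 1 + 1) = (real n / real (N+1)) / 2" unfolding e divide_divide_eq_left by (simp only: mult.commute)
  have r0: "2 * (1 - a / 2) - (1 - a) = (1::real)" for a by simp
  have r: "2 * (1 - real n / real (2 * N + 1 + 1)) - (1 - real n / real (N + 1)) = 1"
    unfolding e2 by (rule r0)
  have "wc N n = of_real (2 * (1 - real n / real (2 * N + 1 + 1)) - (1 - real n / real (N + 1)))"
    unfolding wc_def fejc_def fejcr_def LL_def using n by simp
  then show ?thesis by (simp only: r of_real_1)
qed

lemma teq_DD_YY: "tensor_eq ZL1T (DD N) (YY N)"
  unfolding tensor_eq_def
proof (intro allI impI)
  fix \<phi> assume bil: "bilinear_on ZL1T \<phi>"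
  define c where "c = 2 / real (MM N)"
  define A where "A n m = fejc N n * of_real c * wc N m * \<phi> (pp n) (pp m)" for n m
  have Mp: "real (MM N) > 0" unfolding MM_def by simp
  have LM: "2 * LL N < MM N" unfolding LL_def MM_def by simp
  have lhs: "(\<Sum>(a, b)\<leftarrow>DD N. \<phi> a b) = (\<Sum>n\<le>N. fejc N n * \<phi> (pp n) (pp n))"
    unfolding sum_DD by (intro sum.cong refl bil_mult_right[OF bil ZL1T_pp ZL1T_pp])
  have vw: "\<phi> (Vg N N k) (W2 N k) = (\<Sum>n\<le>N. \<Sum>m\<le>LL N. A n m * of_real (csr N k n * csr N k m))" for k
  proof -
    have "\<phi> (Vg N N k) (W2 N k) = (\<Sum>n\<le>N. \<Sum>m\<le>LL N. (fejc N n * of_real (csr N k n)) *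
        (of_real (2 / real (MM N)) * wc N m * of_real (csr N k m)) * \<phi> (pp n) (pp m))"
      unfolding Vg_def W2_def by (rule bil_sum_both[OF bil ZL1T_pp ZL1T_pp])
    also have "\<dots> = (\<Sum>n\<le>N. \<Sum>m\<le>LL N. A n m * of_real (csr N k n * csr N k m))"
      unfolding A_def c_def by (intro sum.cong refl) (simp add: mult_ac)
    finally show ?thesis .
  qed
  have "(\<Sum>k<MM N. \<phi> (Vg N N k) (W2 N k)) = (\<Sum>k<MM N. \<Sum>n\<le>N. \<Sum>m\<le>LL N. A n m * of_real (csr N k n * csr N k m))"
    by (simp add: vw)
  also have "\<dots> = (\<Sum>n\<le>N. \<Sum>m\<le>LL N. \<Sum>k<MM N. A n m * of_real (csr N k n * csr N k m))"
    by (subst sum.swap) (simp add: sum.swap[of _ "{..<MM N}"])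
  also have "\<dots> = (\<Sum>n\<le>N. \<Sum>m\<le>LL N. A n m * of_real (\<Sum>k<MM N. csr N k n * csr N k m))"
    by (simp add: sum_distrib_left)
  also have "\<dots> = (\<Sum>n\<le>N. \<Sum>m\<le>LL N. A n m * of_real (if n = m then (if n = 0 then real (MM N) else real (MM N) / 2) else 0))"
  proof (intro sum.cong refl)
    fix n m assume "n \<in> {..N}" "m \<in> {..LL N}"
    then have "n \<le> LL N" "m \<le> LL N" unfolding LL_def by auto
    then show "A n m * of_real (\<Sum>k<MM N. csr N k n * csr N k m) =
      A n m * of_real (if n = m then (if n = 0 then real (MM N) else real (MM N) / 2) else 0)"
      unfolding csr_def using cs_orth[OF _ _ LM] by simp
  qed
  also have "\<dots> = (\<Sum>n\<le>N. A n n * of_real (if n = 0 then real (MM N) else real (MM N) / 2))"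
  proof (intro sum.cong refl)
    fix n assume "n \<in> {..N}"
    then have "n \<in> {..LL N}" unfolding LL_def by auto
    then show "(\<Sum>m\<le>LL N. A n m * of_real (if n = m then (if n = 0 then real (MM N) else real (MM N) / 2) else 0)) =
      A n n * of_real (if n = 0 then real (MM N) else real (MM N) / 2)"
      by (simp add: if_distrib[of "\<lambda>r. A n _ * of_real r"] sum.delta cong: if_cong)
  qed
  also have "\<dots> = (\<Sum>n\<le>N. fejc N n * \<phi> (pp n) (pp n) + (if n = 0 then fejc N n * \<phi> (pp n) (pp n) else 0))"
  proof (intro sum.cong refl)
    fix n assume "n \<in> {..N}"
    then have w: "wc N n = 1" by (intro wc_one) simp
    show "A n n * of_real (if n = 0 then real (MM N) else real (MM N) / 2) =
       fejc N n * \<phi> (pp n) (pp n) + (if n = 0 then fejc N n * \<phi> (pp n) (pp n) else 0)"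
    proof (cases "n = 0")
      case True
      have "of_real c * of_real (real (MM N)) = (2 :: complex)" unfolding c_def using Mp
        by (simp flip: of_real_mult)
      then show ?thesis using True unfolding A_def w by (simp add: mult_ac)
    next
      case False
      have "of_real c * of_real (real (MM N) / 2) = (1 :: complex)" unfolding c_def using Mp
        by (simp flip: of_real_mult)
      then show ?thesis using False unfolding A_def w by (simp add: mult_ac)
    qed
  qed
  also have "\<dots> = (\<Sum>n\<le>N. fejc N n * \<phi> (pp n) (pp n)) + \<phi> (pp 0) (pp 0)"
    by (simp add: sum.distrib sum.delta)
  finally have S: "(\<Sum>k<MM N. \<phi> (Vg N N k) (W2 N k)) = (\<Sum>n\<le>N. fejc N n * \<phi> (pp n) (pp n)) + \<phi> (pp 0) (pp 0)" .
  have p0: "(\<lambda>x::complex. 1::complex) = pp 0" by (rule ext) simp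
  have m0: "(\<lambda>x::complex. -1::complex) = (\<lambda>x. (-1) * pp 0 x)" by (rule ext) simp
  have last: "\<phi> (\<lambda>x. -1) (\<lambda>x. 1) = - \<phi> (pp 0) (pp 0)"
  proof -
    have "\<phi> (\<lambda>x. -1) (\<lambda>x. 1) = \<phi> (\<lambda>x. (-1) * pp 0 x) (pp 0)" by (simp only: p0 m0)
    also have "\<dots> = (-1) * \<phi> (pp 0) (pp 0)" by (rule bil_mult_left[OF bil ZL1T_pp ZL1T_pp])
    finally show ?thesis by simp
  qed
  have rhs: "(\<Sum>(a, b)\<leftarrow>YY N. \<phi> a b) = (\<Sum>k<MM N. \<phi> (Vg N N k) (W2 N k)) + \<phi> (\<lambda>x. -1) (\<lambda>x. 1)"
    unfolding YY_def by (simp add: comp_def sum_list_distinct_conv_sum_set atLeast0LessThan)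
  show "(\<Sum>(a, b)\<leftarrow>DD N. \<phi> a b) = (\<Sum>(a, b)\<leftarrow>YY N. \<phi> a b)"
    unfolding lhs rhs S last by simp
qed

lemma proj_DD: "proj_norm ZL1T L1norm (DD N) \<le> 7"
  using proj_norm_le[OF set_YY teq_DD_YY] sum_YY_norm by (rule order_trans)

theorem theorem1p13:
  shows "amenable_on ZL1T L1norm convT"
  unfolding amenable_on_def
proof (intro exI[of _ 7] allI impI)
  fix F :: "cfun set" and \<epsilon> :: real
  assume asm: "finite F \<and> F \<subseteq> ZL1T \<and> \<epsilon> > 0"
  then have F: "finite F" "F \<subseteq> ZL1T" and eps: "\<epsilon> > 0" by auto
  have "\<forall>a\<in>F. \<exists>K0. \<forall>K\<ge>K0. (\<integral>x. cmod (convT (Fej K) a x - a x) \<partial>haarT) < \<epsilon>"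
    using F(2) eps approx_id by blast
  then obtain k where k: "\<And>a K. a \<in> F \<Longrightarrow> K \<ge> k a \<Longrightarrow> (\<integral>x. cmod (convT (Fej K) a x - a x) \<partial>haarT) < \<epsilon>"
    by metis
  define N where "N = Max (insert 0 (k ` F))"
  have kN: "a \<in> F \<Longrightarrow> k a \<le> N" for a unfolding N_def using F(1) by (intro Max_ge) auto
  show "\<exists>xs. set xs \<subseteq> ZL1T \<times> ZL1T \<and> proj_norm ZL1T L1norm xs \<le> 7 \<and>
        (\<forall>a\<in>F. L1norm (\<lambda>x. convT (tensor_mult convT xs) a x - a x) < \<epsilon> \<and>
                L1norm (\<lambda>x. convT a (tensor_mult convT xs) x - a x) < \<epsilon> \<and>
                proj_norm ZL1T L1norm (tensor_commutator convT a xs) < \<epsilon>)"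
  proof (intro exI[of _ "DD N"] conjI ballI)
    show "set (DD N) \<subseteq> ZL1T \<times> ZL1T" by (rule set_DD)
    show "proj_norm ZL1T L1norm (DD N) \<le> 7" by (rule proj_DD)
    fix a assume aF: "a \<in> F"
    then have a: "a \<in> ZL1T" using F(2) by auto
    have lt: "(\<integral>x. cmod (convT (Fej N) a x - a x) \<partial>haarT) < \<epsilon>" using k[OF aF kN[OF aF]] .
    show "L1norm (\<lambda>x. convT (tensor_mult convT (DD N)) a x - a x) < \<epsilon>"
      using lt conv_DD_left[OF a, of N] by simp
    show "L1norm (\<lambda>x. convT a (tensor_mult convT (DD N)) x - a x) < \<epsilon>"
      using lt conv_DD_right[OF a, of N] by simp
    show "proj_norm ZL1T L1norm (tensor_commutator convT a (DD N)) < \<epsilon>"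
      using comm_DD[OF a, of N] eps by linarith
  qed
qed

end
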